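(* Let $M=\{r=0\}$ be a smooth hypersurface in $\mathbb C^n$ through $0$ and let $\zeta$ be a formal curve with $\zeta(0)=0$. Then $\zeta^*r\sim0$ if and only if there exists $U\in\mathcal M_0$ which is a weak limit of matrices in $\mathcal M_1$ such that $\zeta^*\varphi\sim0$ for every $\varphi\in I(h,f-Ug,U^*f-g)$.
   Context: $r$ is a real $\mathcal C^\infty$ defining function ($r(0)=0$, $dr(0)\neq0$). Order the nonzero multi-indices $J\in\mathbb N^n$ by $J<K$ iff $|J|<|K|$, or $|J|=|K|$ and $J$ precedes $K$ lexicographically; enumerate them as $J^{(1)},J^{(2)},\dots$. Write the formal Taylor series of $r$ at $0$ as $r\sim 2\,\mathrm{Re}\,h+4\,\mathrm{Re}\sum_{J}\sum_{K\ge J}a_{JK}z^J\bar z^K$ ($J,K$ nonzero), $h$ formal holomorphic with $h(0)=0$. Set $f_J=z^J+\sum_{K\ge J}\overline{a_{JK}}z^K$, $g_J=z^J-\sum_{K\ge J}\overline{a_{JK}}z^K$, so $r\sim2\,\mathrm{Re}\,h+\sum_J|f_J|^2-\sum_J|g_J|^2$; $f=(f_{J^{(m)}})_m$, $g=(g_{J^{(m)}})_m$. $\mathcal M_0$ is the set of infinite complex matrices $\{a_{ij}\}_{i,j\ge1}$ with all row and column sums $\sum_j|a_{ij}|^2\le1$, $\sum_i|a_{ij}|^2\le1$; $\mathcal M_1\subset\mathcal M_0$ the unitary matrices; $A^*=\{\overline{a_{ji}}\}$; weak convergence is entrywise convergence. $(Ug)_i=\sum_mU_{im}g_m$, $(U^*f)_i=\sum_m\overline{U_{mi}}f_m$.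 $I(h,f-Ug,U^*f-g)$ is the ideal of the formal power series ring ${}_n\mathcal O_0$ generated by $h$ and all components of $f-Ug$ and $U^*f-g$. A formal curve is an $n$-tuple of formal power series in $t$; $\zeta^*\varphi=\varphi\circ\zeta$, and $\sim0$ means vanishing to infinite order (all coefficients zero). *)

theory Defs
  imports Complex_Main "HOL-Computational_Algebra.Formal_Power_Series"
begin

text \<open>Multi-indices in N^n are functions 'n => nat, where the finite linearly
ordered type 'n indexes the coordinates z_1,...,z_n of C^n.
Formal power series in z (holomorphic) are functions from multi-indices to complex;
formal series in (z, conj z) are functions of pairs of multi-indices
(coefficient of z^J conj(z)^K).\<close>

type_synonym 'n mi = "'n \<Rightarrow> nat"
type_synonym 'n fser = "'n mi \<Rightarrow> complex"

definition mi_zero :: "'n mi" where "mi_zero = (\<lambda>_. 0)"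

definition mi_deg :: "('n::finite) mi \<Rightarrow> nat" where
  "mi_deg J = (\<Sum>i\<in>UNIV. J i)"

definition mi_lex :: "('n::linorder) mi \<Rightarrow> 'n mi \<Rightarrow> bool" where
  "mi_lex J K \<longleftrightarrow> (\<exists>i. J i < K i \<and> (\<forall>j<i. J j = K j))"

definition mi_less :: "('n::{finite,linorder}) mi \<Rightarrow> 'n mi \<Rightarrow> bool" where
  "mi_less J K \<longleftrightarrow> mi_deg J < mi_deg K \<or> (mi_deg J = mi_deg K \<and> mi_lex J K)"

definition mi_le :: "('n::{finite,linorder}) mi \<Rightarrow> 'n mi \<Rightarrow> bool" where
  "mi_le J K \<longleftrightarrow> J = K \<or> mi_less J K"

text \<open>Enumeration of the nonzero multi-indices in increasing order:
enumJ m is J^(m+1) of the paper (indices shifted to start at 0).\<close>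
definition enumJ :: "nat \<Rightarrow> ('n::{finite,linorder}) mi" where
  "enumJ m = (THE J. J \<noteq> mi_zero \<and> card {K. K \<noteq> mi_zero \<and> mi_less K J} = m)"

text \<open>Coefficient of z^J conj(z)^K in 2 Re h + 4 Re sum_{0<J<=K} a_JK z^J conj(z)^K.\<close>
definition repr_coeff ::
  "('n::{finite,linorder}) fser \<Rightarrow> ('n mi \<Rightarrow> 'n mi \<Rightarrow> complex) \<Rightarrow> 'n mi \<Rightarrow> 'n mi \<Rightarrow> complex" where
  "repr_coeff h a J K =
     (if K = mi_zero then h J else 0) + (if J = mi_zero then cnj (h K) else 0) +
     (if J \<noteq> mi_zero \<and> K \<noteq> mi_zero then
        (if J = K then 2 * a J J + 2 * cnj (a J J)
         else if mi_less J K then 2 * a J K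
         else if mi_less K J then 2 * cnj (a K J) else 0)
      else 0)"

definition fJ :: "('n mi \<Rightarrow> 'n mi \<Rightarrow> complex) \<Rightarrow> ('n::{finite,linorder}) mi \<Rightarrow> 'n fser" where
  "fJ a J = (\<lambda>K. (if K = J then 1 else 0) + (if mi_le J K then cnj (a J K) else 0))"

definition gJ :: "('n mi \<Rightarrow> 'n mi \<Rightarrow> complex) \<Rightarrow> ('n::{finite,linorder}) mi \<Rightarrow> 'n fser" where
  "gJ a J = (\<lambda>K. (if K = J then 1 else 0) - (if mi_le J K then cnj (a J K) else 0))"

text \<open>Infinite matrices, indexed from 0.\<close>
type_synonym imat = "nat \<Rightarrow> nat \<Rightarrow> complex"

definition M0 :: "imat set" where
  "M0 = {A. (\<forall>i. summable (\<lambda>j. (cmod (A i j))\<^sup>2) \<and> (\<Sum>j. (cmod (A i j))\<^sup>2) \<le> 1) \<and>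
            (\<forall>j. summable (\<lambda>i. (cmod (A i j))\<^sup>2) \<and> (\<Sum>i. (cmod (A i j))\<^sup>2) \<le> 1)}"

definition mat_adj :: "imat \<Rightarrow> imat" where
  "mat_adj A = (\<lambda>i j. cnj (A j i))"

definition mat_mult :: "imat \<Rightarrow> imat \<Rightarrow> imat" where
  "mat_mult A B = (\<lambda>i k. \<Sum>j. A i j * B j k)"

definition mat_id :: imat where
  "mat_id = (\<lambda>i j. if i = j then 1 else 0)"

definition M1 :: "imat set" where
  "M1 = {U \<in> M0. mat_mult U (mat_adj U) = mat_id \<and> mat_mult (mat_adj U) U = mat_id}"

definition weak_limit_M1 :: "imat \<Rightarrow> bool" where
  "weak_limit_M1 U \<longleftrightarrow> (\<exists>Us. (\<forall>k. Us k \<in> M1) \<and> (\<forall>i j. (\<lambda>k. Us k i j) \<longlonglongrightarrow> U i j))"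

text \<open>Components of f - U g and U^* f - g (coefficientwise; each coefficient is a finite sum).\<close>
definition fUg :: "('n mi \<Rightarrow> 'n mi \<Rightarrow> complex) \<Rightarrow> imat \<Rightarrow> nat \<Rightarrow> ('n::{finite,linorder}) fser" where
  "fUg a U i = (\<lambda>K. fJ a (enumJ i) K - (\<Sum>m. U i m * gJ a (enumJ m) K))"

definition Ufg :: "('n mi \<Rightarrow> 'n mi \<Rightarrow> complex) \<Rightarrow> imat \<Rightarrow> nat \<Rightarrow> ('n::{finite,linorder}) fser" where
  "Ufg a U i = (\<lambda>K. (\<Sum>m. cnj (U m i) * fJ a (enumJ m) K) - gJ a (enumJ i) K)"

definition fser_mult :: "('n::finite) fser \<Rightarrow> 'n fser \<Rightarrow> 'n fser" where
  "fser_mult p q = (\<lambda>K. \<Sum>J\<in>{J. \<forall>i. J i \<le> K i}. p J * q (\<lambda>i. K i - J i))"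

definition fser_ideal :: "('n::finite) fser set \<Rightarrow> 'n fser set" where
  "fser_ideal G = {\<phi>. \<exists>S p. finite S \<and> S \<subseteq> G \<and> \<phi> = (\<lambda>K. \<Sum>q\<in>S. fser_mult (p q) q K)}"

definition curve_mono :: "('n::finite \<Rightarrow> complex fps) \<Rightarrow> 'n mi \<Rightarrow> complex fps" where
  "curve_mono \<zeta> J = (\<Prod>i\<in>UNIV. (\<zeta> i) ^ (J i))"

definition pull_hol :: "('n::finite \<Rightarrow> complex fps) \<Rightarrow> 'n fser \<Rightarrow> complex fps" where
  "pull_hol \<zeta> \<phi> = Abs_fps (\<lambda>k. \<Sum>J\<in>{J. mi_deg J \<le> k}. \<phi> J * fps_nth (curve_mono \<zeta> J) k)"

text \<open>Pullback of a formal series in (z, conj z): coefficient of t^a conj(t)^b.\<close>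
definition pull_real :: "('n::finite \<Rightarrow> complex fps) \<Rightarrow> ('n mi \<Rightarrow> 'n mi \<Rightarrow> complex) \<Rightarrow> nat \<Rightarrow> nat \<Rightarrow> complex" where
  "pull_real \<zeta> c a b = (\<Sum>J\<in>{J. mi_deg J \<le> a}. \<Sum>K\<in>{K. mi_deg K \<le> b}.
      c J K * fps_nth (curve_mono \<zeta> J) a * cnj (fps_nth (curve_mono \<zeta> K) b))"

definition mi_unit :: "'n \<Rightarrow> 'n mi" where
  "mi_unit i = (\<lambda>j. if j = i then 1 else 0)"

end

theory Submission imports Defs "HOL-Analysis.Analysis" "HOL-Library.Diagonal_Subsequence" begin

section \<open>Multi-index order and enumeration\<close>

definition Dset :: "nat \<Rightarrow> ('n::finite) mi set" where "Dset d = {J. mi_deg J \<le> d}"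
definition NZ :: "nat \<Rightarrow> ('n::finite) mi set" where "NZ d = {J. J \<noteq> mi_zero \<and> mi_deg J \<le> d}"
definition rk :: "('n::{finite,linorder}) mi \<Rightarrow> nat" where
  "rk J = card {K. K \<noteq> mi_zero \<and> mi_less K J}"

lemma mi_deg_ge: "J i \<le> mi_deg (J::('n::finite) mi)"
  unfolding mi_deg_def by (rule member_le_sum) auto

lemma mi_deg_eq0: "mi_deg (J::('n::finite) mi) = 0 \<longleftrightarrow> J = mi_zero"
  unfolding mi_deg_def mi_zero_def by (auto simp: fun_eq_iff)

lemma finite_Dset: "finite (Dset d :: ('n::finite) mi set)"
proof -
  have "Dset d \<subseteq> {f::'n mi. \<forall>x. (x \<in> UNIV \<longrightarrow> f x \<in> {..d}) \<and> (x \<notin> UNIV \<longrightarrow> f x = 0)}"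
    unfolding Dset_def using mi_deg_ge order_trans by fastforce
  moreover have "finite {f::'n mi. \<forall>x. (x \<in> UNIV \<longrightarrow> f x \<in> {..d}) \<and> (x \<notin> UNIV \<longrightarrow> f x = 0)}"
    by (rule finite_set_of_finite_funs) auto
  ultimately show ?thesis by (rule finite_subset)
qed

lemma finite_NZ: "finite (NZ d :: ('n::finite) mi set)"
  by (rule finite_subset[OF _ finite_Dset[of d]]) (auto simp: NZ_def Dset_def)

lemma mi_lex_irrefl: "\<not> mi_lex J J" by (simp add: mi_lex_def)

lemma mi_lex_trans: "mi_lex J K \<Longrightarrow> mi_lex K L \<Longrightarrow> mi_lex J L"
  unfolding mi_lex_def
proof (elim exE conjE)
  fix i j assume a: "J i < K i" "\<forall>k<i. J k = K k" "K j < L j" "\<forall>k<j. K k = L k"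
  show "\<exists>i. J i < L i \<and> (\<forall>j<i. J j = L j)"
  proof (cases i j rule: linorder_cases)
    case less thus ?thesis using a by (intro exI[of _ i]) auto
  next
    case equal thus ?thesis using a by (intro exI[of _ i]) auto
  next
    case greater thus ?thesis using a by (intro exI[of _ j]) auto
  qed
qed

lemma mi_lex_total: "J \<noteq> (K::('n::{finite,linorder}) mi) \<Longrightarrow> mi_lex J K \<or> mi_lex K J"
proof -
  assume "J \<noteq> K"
  then obtain i where i: "J i \<noteq> K i" by auto
  define m where "m = Min {i. J i \<noteq> K i}"
  have fin: "finite {i. J i \<noteq> K i}" by simp
  have m1: "J m \<noteq> K m" using i fin unfolding m_def using Min_in by blast
  have m2: "\<forall>j<m. J j = K j"
  proof (intro allI impI)
    fix j assume "j < m"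
    show "J j = K j"
    proof (rule ccontr)
      assume "J j \<noteq> K j"
      hence "m \<le> j" unfolding m_def using Min_le[OF fin] by simp
      thus False using \<open>j < m\<close> by simp
    qed
  qed
  show ?thesis
  proof (cases "J m < K m")
    case True thus ?thesis using m2 unfolding mi_lex_def by blast
  next
    case False
    hence "K m < J m" using m1 by simp
    thus ?thesis using m2 unfolding mi_lex_def by metis
  qed
qed

lemma mi_less_irrefl: "\<not> mi_less J (J::('n::{finite,linorder}) mi)"
  by (simp add: mi_less_def mi_lex_irrefl)

lemma mi_less_trans: "mi_less J K \<Longrightarrow> mi_less K L \<Longrightarrow> mi_less J (L::('n::{finite,linorder}) mi)"
  unfolding mi_less_def by (auto intro: mi_lex_trans)

lemma mi_less_total: "J \<noteq> (K::('n::{finite,linorder}) mi) \<Longrightarrow> mi_less J K \<or> mi_less K J"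
  using mi_lex_total[of J K] unfolding mi_less_def by (cases "mi_deg J" "mi_deg K" rule: linorder_cases) auto

lemma mi_less_asym: "mi_less J K \<Longrightarrow> \<not> mi_less K (J::('n::{finite,linorder}) mi)"
  using mi_less_trans mi_less_irrefl by blast

lemma mi_less_deg: "mi_less J K \<Longrightarrow> mi_deg J \<le> mi_deg K"
  unfolding mi_less_def by auto

lemma mi_le_deg: "mi_le J K \<Longrightarrow> mi_deg J \<le> mi_deg K"
  unfolding mi_le_def using mi_less_deg by auto

lemma mi_le_zero: "J \<noteq> mi_zero \<Longrightarrow> \<not> mi_le J (mi_zero::('n::{finite,linorder}) mi)"
  using mi_le_deg[of J mi_zero] mi_deg_eq0[of J] mi_deg_eq0[of "mi_zero::'n mi"] by auto

lemma rk_set_sub: "{K. K \<noteq> mi_zero \<and> mi_less K J} \<subseteq> NZ (mi_deg (J::('n::{finite,linorder}) mi))"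
  unfolding NZ_def using mi_less_deg by auto

lemma rk_set_fin: "finite {K. K \<noteq> mi_zero \<and> mi_less K (J::('n::{finite,linorder}) mi)}"
  using rk_set_sub finite_NZ finite_subset by blast

lemma rk_mono:
  assumes "mi_less J K" "J \<noteq> mi_zero" shows "rk J < rk (K::('n::{finite,linorder}) mi)"
proof -
  let ?A = "{K'. K' \<noteq> mi_zero \<and> mi_less K' J}" and ?B = "{K'. K' \<noteq> mi_zero \<and> mi_less K' K}"
  have "?A \<subseteq> ?B" using mi_less_trans[OF _ assms(1)] by blast
  moreover have "J \<in> ?B" "J \<notin> ?A" using assms mi_less_irrefl by auto
  ultimately have "?A \<subset> ?B" by blast
  thus ?thesis unfolding rk_def by (rule psubset_card_mono[OF rk_set_fin])
qed

lemma rk_inj: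
  assumes "J \<noteq> mi_zero" "K \<noteq> mi_zero" "rk J = rk K" shows "J = (K::('n::{finite,linorder}) mi)"
proof (rule ccontr)
  assume "J \<noteq> K"
  hence "mi_less J K \<or> mi_less K J" by (rule mi_less_total)
  thus False
  proof
    assume "mi_less J K"
    hence "rk J < rk K" using assms(1) by (rule rk_mono)
    thus False using assms(3) by simp
  next
    assume "mi_less K J"
    hence "rk K < rk J" using assms(2) by (rule rk_mono)
    thus False using assms(3) by simp
  qed
qed

lemma rk_less: "(J::('n::{finite,linorder}) mi) \<in> NZ d \<Longrightarrow> rk J < card (NZ d :: 'n mi set)"
proof -
  assume J: "J \<in> NZ d"
  have "{K. K \<noteq> mi_zero \<and> mi_less K J} \<subseteq> NZ d - {J}"
    using J mi_less_deg mi_less_irrefl unfolding NZ_def by fastforce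
  hence "rk J \<le> card (NZ d - {J})" unfolding rk_def
    by (intro card_mono) (auto simp: finite_NZ)
  also have "\<dots> < card (NZ d :: 'n mi set)" by (rule card_Diff1_less[OF finite_NZ J])
  finally show ?thesis .
qed

lemma rk_bij: "bij_betw (rk :: ('n::{finite,linorder}) mi \<Rightarrow> nat) (NZ d) {..<card (NZ d :: 'n mi set)}"
proof -
  have inj: "inj_on rk (NZ d :: 'n mi set)" using rk_inj unfolding inj_on_def NZ_def by blast
  have sub: "rk ` (NZ d :: 'n mi set) \<subseteq> {..<card (NZ d :: 'n mi set)}" using rk_less by auto
  have "card (rk ` (NZ d :: 'n mi set)) = card {..<card (NZ d :: 'n mi set)}"
    using card_image[OF inj] by simp
  hence "rk ` (NZ d :: 'n mi set) = {..<card (NZ d :: 'n mi set)}"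
    using card_subset_eq[OF _ sub] by simp
  thus ?thesis using inj unfolding bij_betw_def by simp
qed

lemma card_NZ_ge: "d \<le> card (NZ d :: ('n::finite) mi set)"
proof -
  obtain i0 :: 'n where True by simp
  define e where "e = (\<lambda>k::nat. (\<lambda>i::'n. if i = i0 then k else 0))"
  have deg: "mi_deg (e k) = k" for k
  proof -
    have "mi_deg (e k) = (\<Sum>i\<in>UNIV. if i = i0 then k else 0)" unfolding mi_deg_def e_def by simp
    also have "\<dots> = k" by (simp add: sum.delta)
    finally show ?thesis .
  qed
  have inj: "inj_on e {1..d}"
  proof (rule inj_onI)
    fix x y assume "e x = e y"
    hence "e x i0 = e y i0" by simp
    thus "x = y" by (simp add: e_def)
  qed
  have sub: "e ` {1..d} \<subseteq> NZ d"
  proof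
    fix x assume "x \<in> e ` {1..d}"
    then obtain k where k: "k \<in> {1..d}" "x = e k" by auto
    have "e k \<noteq> mi_zero" using deg[of k] mi_deg_eq0[of "e k"] k by auto
    thus "x \<in> NZ d" using k deg[of k] unfolding NZ_def by auto
  qed
  have "card {1..d} \<le> card (NZ d :: 'n mi set)"
    by (rule card_inj_on_le[OF inj sub finite_NZ])
  thus ?thesis by simp
qed

lemma enumJ_ex1: "\<exists>!J::('n::{finite,linorder}) mi. J \<noteq> mi_zero \<and> rk J = m"
proof -
  have "Suc m \<le> card (NZ (Suc m) :: 'n mi set)" by (rule card_NZ_ge)
  hence "m < card (NZ (Suc m) :: 'n mi set)" by simp
  then obtain J :: "'n mi" where "J \<in> NZ (Suc m)" "rk J = m"
    using rk_bij[of "Suc m"] unfolding bij_betw_def by (metis imageE lessThan_iff)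
  thus ?thesis using rk_inj unfolding NZ_def by blast
qed

lemma enumJ_spec: "(enumJ m :: ('n::{finite,linorder}) mi) \<noteq> mi_zero \<and> rk (enumJ m :: 'n mi) = m"
proof -
  have e: "(enumJ m :: 'n mi) = (THE J::'n mi. J \<noteq> mi_zero \<and> rk J = m)" unfolding enumJ_def rk_def by simp
  have ex: "\<exists>!J::'n mi. J \<noteq> mi_zero \<and> rk J = m" by (rule enumJ_ex1)
  show ?thesis unfolding e using theI'[OF ex] by simp
qed

lemma enumJ_nz: "enumJ m \<noteq> mi_zero" using enumJ_spec by blast
lemma rk_enumJ: "rk (enumJ m :: ('n::{finite,linorder}) mi) = m" using enumJ_spec by blast

lemma enumJ_rk: "J \<noteq> mi_zero \<Longrightarrow> enumJ (rk J) = (J::('n::{finite,linorder}) mi)"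
  using rk_inj enumJ_spec by metis

lemma enumJ_deg: "mi_deg (enumJ m :: ('n::{finite,linorder}) mi) \<le> d \<longleftrightarrow> m < card (NZ d :: 'n mi set)"
proof
  assume "mi_deg (enumJ m :: 'n mi) \<le> d"
  hence "(enumJ m :: 'n mi) \<in> NZ d" using enumJ_nz unfolding NZ_def by blast
  hence "rk (enumJ m :: 'n mi) < card (NZ d :: 'n mi set)" by (rule rk_less)
  thus "m < card (NZ d :: 'n mi set)" by (simp add: rk_enumJ)
next
  assume "m < card (NZ d :: 'n mi set)"
  then obtain J :: "'n mi" where "J \<in> NZ d" "rk J = m"
    using rk_bij[of d] unfolding bij_betw_def by (metis imageE lessThan_iff)
  hence "enumJ m = J" using enumJ_rk[of J] unfolding NZ_def by auto
  thus "mi_deg (enumJ m :: 'n mi) \<le> d" using \<open>J \<in> NZ d\<close> unfolding NZ_def by auto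
qed

lemma enumJ_bij: "bij_betw enumJ {..<card (NZ d :: ('n::{finite,linorder}) mi set)} (NZ d :: 'n mi set)"
proof (rule bij_betw_imageI)
  show "inj_on (enumJ :: nat \<Rightarrow> 'n mi) {..<card (NZ d :: 'n mi set)}"
  proof (rule inj_onI)
    fix x y assume "(enumJ x :: 'n mi) = enumJ y"
    hence "rk (enumJ x :: 'n mi) = rk (enumJ y :: 'n mi)" by simp
    thus "x = y" by (simp add: rk_enumJ)
  qed
  show "(enumJ :: nat \<Rightarrow> 'n mi) ` {..<card (NZ d :: 'n mi set)} = NZ d"
  proof
    show "(enumJ :: nat \<Rightarrow> 'n mi) ` {..<card (NZ d :: 'n mi set)} \<subseteq> NZ d"
    proof
      fix J assume "J \<in> (enumJ :: nat \<Rightarrow> 'n mi) ` {..<card (NZ d :: 'n mi set)}"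
      then obtain m where m: "m < card (NZ d :: 'n mi set)" "J = enumJ m" by auto
      have "mi_deg (enumJ m :: 'n mi) \<le> d" using m(1) by (simp add: enumJ_deg)
      thus "J \<in> NZ d" using m(2) enumJ_nz unfolding NZ_def by auto
    qed
    show "NZ d \<subseteq> (enumJ :: nat \<Rightarrow> 'n mi) ` {..<card (NZ d :: 'n mi set)}"
    proof
      fix J :: "'n mi" assume J: "J \<in> NZ d"
      hence "J \<noteq> mi_zero" unfolding NZ_def by auto
      hence "enumJ (rk J) = J" by (rule enumJ_rk)
      moreover have "rk J \<in> {..<card (NZ d :: 'n mi set)}" using rk_less[OF J] by simp
      ultimately show "J \<in> enumJ ` {..<card (NZ d :: 'n mi set)}" by (metis image_eqI)
    qed
  qed
qed

lemma card_NZ_mono: "d \<le> e \<Longrightarrow> card (NZ d :: ('n::finite) mi set) \<le> card (NZ e :: 'n mi set)"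
  by (rule card_mono[OF finite_NZ]) (auto simp: NZ_def)


section \<open>Pullback of holomorphic series\<close>

lemma ord_mult:
  fixes f g :: "complex fps"
  assumes "\<forall>j<a. fps_nth f j = 0" "\<forall>j<b. fps_nth g j = 0"
  shows "\<forall>j<a+b. fps_nth (f*g) j = 0"
proof (intro allI impI)
  fix j assume j: "j < a + b"
  have "fps_nth (f*g) j = (\<Sum>i=0..j. fps_nth f i * fps_nth g (j - i))" by (rule fps_mult_nth)
  also have "\<dots> = 0"
  proof (rule sum.neutral, intro ballI)
    fix i assume ij: "i \<in> {0..j}"
    show "fps_nth f i * fps_nth g (j - i) = 0"
    proof (cases "i < a")
      case True thus ?thesis using assms(1) by simp
    next
      case False hence "j - i < b" using j ij by auto
      thus ?thesis using assms(2) by simp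
    qed
  qed
  finally show "fps_nth (f*g) j = 0" .
qed

lemma ord_power:
  fixes f :: "complex fps"
  assumes "fps_nth f 0 = 0" shows "\<forall>j<n. fps_nth (f^n) j = 0"
proof (induction n)
  case 0 thus ?case by simp
next
  case (Suc n)
  have "\<forall>j<1. fps_nth f j = 0" using assms by simp
  from ord_mult[OF this Suc.IH] show ?case by simp
qed

lemma ord_prod:
  fixes F :: "'a \<Rightarrow> complex fps"
  assumes "finite S" "\<forall>i\<in>S. \<forall>j<e i. fps_nth (F i) j = 0"
  shows "\<forall>j<(\<Sum>i\<in>S. e i). fps_nth (\<Prod>i\<in>S. F i) j = 0"
  using assms
proof (induction S rule: finite_induct)
  case empty thus ?case by simp
next
  case (insert x S)
  have a: "\<forall>j<e x. fps_nth (F x) j = 0" using insert.prems by simp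
  have b: "\<forall>j<(\<Sum>i\<in>S. e i). fps_nth (\<Prod>i\<in>S. F i) j = 0" using insert.IH insert.prems by simp
  show ?case using ord_mult[OF a b] insert.hyps by simp
qed

lemma mi_deg_add: "mi_deg (\<lambda>i. J i + K i) = mi_deg J + mi_deg (K::('n::finite) mi)"
  unfolding mi_deg_def by (simp add: sum.distrib)

lemma curve_mono_add:
  "curve_mono \<zeta> (\<lambda>i. J i + K i) = curve_mono \<zeta> J * curve_mono \<zeta> (K::('n::finite) mi)"
  unfolding curve_mono_def by (simp add: power_add prod.distrib)

lemma curve_mono_zero: "curve_mono \<zeta> (mi_zero::('n::finite) mi) = 1"
  unfolding curve_mono_def mi_zero_def by simp

lemma curve_mono_low:
  assumes "\<forall>i. fps_nth (\<zeta> i) 0 = 0" "k < mi_deg J"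
  shows "fps_nth (curve_mono \<zeta> (J::('n::finite) mi)) k = 0"
proof -
  have "\<forall>j<(\<Sum>i\<in>UNIV. J i). fps_nth (\<Prod>i\<in>UNIV. (\<zeta> i) ^ (J i)) j = 0"
    by (rule ord_prod) (use assms(1) ord_power in auto)
  thus ?thesis using assms(2) unfolding curve_mono_def mi_deg_def by simp
qed

lemma pull_hol_nth: "fps_nth (pull_hol \<zeta> \<phi>) k = (\<Sum>J\<in>Dset k. \<phi> J * fps_nth (curve_mono \<zeta> J) k)"
  unfolding pull_hol_def Dset_def by simp

lemma pull_hol_sup:
  assumes c0: "\<forall>i. fps_nth (\<zeta> i) 0 = 0" and T: "finite T" "Dset k \<subseteq> T"
  shows "fps_nth (pull_hol \<zeta> \<phi>) k = (\<Sum>J\<in>T. \<phi> J * fps_nth (curve_mono \<zeta> (J::('n::finite) mi)) k)"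
  unfolding pull_hol_nth
proof (rule sum.mono_neutral_left[OF T(1) T(2)], intro ballI)
  fix J assume "J \<in> T - Dset k"
  hence "k < mi_deg J" unfolding Dset_def by auto
  thus "\<phi> J * fps_nth (curve_mono \<zeta> J) k = 0" using curve_mono_low[OF c0] by simp
qed

lemma pull_hol_sum:
  "pull_hol \<zeta> (\<lambda>K. \<Sum>q\<in>S. F q K) = (\<Sum>q\<in>S. pull_hol \<zeta> (F q))"
proof (rule fps_ext)
  fix k
  show "fps_nth (pull_hol \<zeta> (\<lambda>K. \<Sum>q\<in>S. F q K)) k = fps_nth (\<Sum>q\<in>S. pull_hol \<zeta> (F q)) k"
    unfolding fps_sum_nth pull_hol_nth by (simp add: sum_distrib_right sum.swap[of _ S])
qed


lemma mi_deg_mono: "(\<forall>i. J i \<le> L i) \<Longrightarrow> mi_deg J \<le> mi_deg (L::('n::finite) mi)"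
  unfolding mi_deg_def by (rule sum_mono) auto

lemma finite_Lo: "finite {J. \<forall>i. J i \<le> (L::('n::finite) mi) i}"
  by (rule finite_subset[OF _ finite_Dset[of "mi_deg L"]]) (auto simp: Dset_def intro: mi_deg_mono)

lemma pull_hol_mult:
  assumes c0: "\<forall>i. fps_nth (\<zeta> i) 0 = 0"
  shows "pull_hol \<zeta> (fser_mult p q) = pull_hol \<zeta> p * pull_hol \<zeta> (q::('n::finite) fser)"
proof (rule fps_ext)
  fix k
  let ?T = "Dset k :: 'n mi set"
  let ?P = "\<lambda>J. fps_nth (curve_mono \<zeta> J) k"
  let ?S = "{(J,K). J \<in> ?T \<and> K \<in> ?T \<and> (\<lambda>i. J i + K i) \<in> ?T}"
  have fT: "finite ?T" by (rule finite_Dset)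
  have "fps_nth (pull_hol \<zeta> p * pull_hol \<zeta> q) k
      = (\<Sum>i=0..k. fps_nth (pull_hol \<zeta> p) i * fps_nth (pull_hol \<zeta> q) (k - i))" by (rule fps_mult_nth)
  also have "\<dots> = (\<Sum>i=0..k. (\<Sum>J\<in>?T. p J * fps_nth (curve_mono \<zeta> J) i) *
                       (\<Sum>K\<in>?T. q K * fps_nth (curve_mono \<zeta> K) (k-i)))"
  proof (rule sum.cong[OF refl])
    fix i assume "i \<in> {0..k}"
    hence s1: "Dset i \<subseteq> ?T" "Dset (k-i) \<subseteq> ?T" by (auto simp: Dset_def)
    show "fps_nth (pull_hol \<zeta> p) i * fps_nth (pull_hol \<zeta> q) (k - i) =
      (\<Sum>J\<in>?T. p J * fps_nth (curve_mono \<zeta> J) i) * (\<Sum>K\<in>?T. q K * fps_nth (curve_mono \<zeta> K) (k-i))"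
      using pull_hol_sup[OF c0 fT s1(1), where \<phi>=p] pull_hol_sup[OF c0 fT s1(2), where \<phi>=q] by simp
  qed
  also have "\<dots> = (\<Sum>i=0..k. \<Sum>J\<in>?T. \<Sum>K\<in>?T. p J * q K * (fps_nth (curve_mono \<zeta> J) i * fps_nth (curve_mono \<zeta> K) (k-i)))"
    by (simp add: sum_product mult_ac)
  also have "\<dots> = (\<Sum>J\<in>?T. \<Sum>i=0..k. \<Sum>K\<in>?T. p J * q K * (fps_nth (curve_mono \<zeta> J) i * fps_nth (curve_mono \<zeta> K) (k-i)))"
    by (rule sum.swap)
  also have "\<dots> = (\<Sum>J\<in>?T. \<Sum>K\<in>?T. \<Sum>i=0..k. p J * q K * (fps_nth (curve_mono \<zeta> J) i * fps_nth (curve_mono \<zeta> K) (k-i)))"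
    by (rule sum.cong[OF refl], rule sum.swap)
  also have "\<dots> = (\<Sum>J\<in>?T. \<Sum>K\<in>?T. p J * q K * ?P (\<lambda>i. J i + K i))"
    by (simp add: curve_mono_add fps_mult_nth sum_distrib_left)
  also have "\<dots> = (\<Sum>(J,K)\<in>?T \<times> ?T. p J * q K * ?P (\<lambda>i. J i + K i))"
    by (rule sum.cartesian_product)
  also have "\<dots> = (\<Sum>(J,K)\<in>?S. p J * q K * ?P (\<lambda>i. J i + K i))"
  proof (rule sum.mono_neutral_right)
    show "finite (?T \<times> ?T)" using fT by simp
    show "?S \<subseteq> ?T \<times> ?T" by auto
    show "\<forall>x\<in>?T \<times> ?T - ?S. (case x of (J,K) \<Rightarrow> p J * q K * ?P (\<lambda>i. J i + K i)) = 0"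
    proof
      fix x assume x: "x \<in> ?T \<times> ?T - ?S"
      obtain J K where xJK: "x = (J,K)" by (cases x)
      have "k < mi_deg (\<lambda>i. J i + K i)" using x xJK unfolding Dset_def by auto
      thus "(case x of (J,K) \<Rightarrow> p J * q K * ?P (\<lambda>i. J i + K i)) = 0"
        using curve_mono_low[OF c0] xJK by simp
    qed
  qed
  finally have R: "fps_nth (pull_hol \<zeta> p * pull_hol \<zeta> q) k = (\<Sum>(J,K)\<in>?S. p J * q K * ?P (\<lambda>i. J i + K i))" .
  have "fps_nth (pull_hol \<zeta> (fser_mult p q)) k = (\<Sum>L\<in>?T. \<Sum>J\<in>{J. \<forall>i. J i \<le> L i}. p J * q (\<lambda>i. L i - J i) * ?P L)"
    unfolding pull_hol_nth fser_mult_def by (simp add: sum_distrib_right)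
  also have "\<dots> = (\<Sum>(L,J)\<in>Sigma ?T (\<lambda>L. {J. \<forall>i. J i \<le> L i}). p J * q (\<lambda>i. L i - J i) * ?P L)"
    by (rule sum.Sigma[OF fT]) (simp add: finite_Lo)
  also have "\<dots> = (\<Sum>(J,K)\<in>?S. p J * q K * ?P (\<lambda>i. J i + K i))"
  proof (rule sum.reindex_bij_witness[where i="\<lambda>(J,K). ((\<lambda>i. J i + K i), J)" and j="\<lambda>(L,J). (J, (\<lambda>i. L i - J i))"])
    fix a assume a: "a \<in> Sigma ?T (\<lambda>L. {J. \<forall>i. J i \<le> L i})"
    obtain L J where aLJ: "a = (L,J)" by (cases a)
    have le: "\<forall>i. J i \<le> L i" and LT: "mi_deg L \<le> k" using a aLJ by (auto simp: Dset_def)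
    have eqL: "(\<lambda>i. J i + (L i - J i)) = L" using le by (auto simp: fun_eq_iff)
    show "(case case a of (L, J) \<Rightarrow> (J, \<lambda>i. L i - J i) of (J, K) \<Rightarrow> (\<lambda>i. J i + K i, J)) = a"
      using aLJ eqL by simp
    have d1: "mi_deg J \<le> k" using mi_deg_mono[OF le] LT by simp
    have d2: "mi_deg (\<lambda>i. L i - J i) \<le> k" using mi_deg_mono[of "\<lambda>i. L i - J i" L] LT by simp
    show "(case a of (L, J) \<Rightarrow> (J, \<lambda>i. L i - J i)) \<in> ?S"
      using aLJ eqL d1 d2 LT by (simp add: Dset_def)
    show "(case case a of (L, J) \<Rightarrow> (J, \<lambda>i. L i - J i) of (J, K) \<Rightarrow> p J * q K * ?P (\<lambda>i. J i + K i)) =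
          (case a of (L, J) \<Rightarrow> p J * q (\<lambda>i. L i - J i) * ?P L)"
      using aLJ eqL by simp
  next
    fix b assume b: "b \<in> ?S"
    obtain J K where bJK: "b = (J,K)" by (cases b)
    show "(case case b of (J, K) \<Rightarrow> (\<lambda>i. J i + K i, J) of (L, J) \<Rightarrow> (J, \<lambda>i. L i - J i)) = b"
      using bJK by simp
    show "(case b of (J, K) \<Rightarrow> (\<lambda>i. J i + K i, J)) \<in> Sigma ?T (\<lambda>L. {J. \<forall>i. J i \<le> L i})"
      using b bJK by auto
  qed
  finally show "fps_nth (pull_hol \<zeta> (fser_mult p q)) k = fps_nth (pull_hol \<zeta> p * pull_hol \<zeta> q) k"
    using R by simp
qed

definition delta0 :: "('n::finite) fser" where "delta0 = (\<lambda>J. if J = mi_zero then 1 else 0)"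

lemma fser_mult_delta0: "fser_mult delta0 q = (q::('n::finite) fser)"
proof (rule ext)
  fix K :: "'n mi"
  have z: "mi_zero \<in> {J. \<forall>i. J i \<le> K i}" by (simp add: mi_zero_def)
  have "fser_mult delta0 q K = (\<Sum>J\<in>{J. \<forall>i. J i \<le> K i}. (if J = mi_zero then q (\<lambda>i. K i - J i) else 0))"
    unfolding fser_mult_def delta0_def by (rule sum.cong) auto
  also have "\<dots> = q (\<lambda>i. K i - mi_zero i)" using z finite_Lo[of K] by (simp add: sum.delta)
  also have "\<dots> = q K" by (simp add: mi_zero_def)
  finally show "fser_mult delta0 q K = q K" .
qed

lemma gen_in_ideal: "q \<in> G \<Longrightarrow> q \<in> fser_ideal (G::('n::finite) fser set)"
  unfolding fser_ideal_def
  by (rule CollectI, rule exI[of _ "{q}"], rule exI[of _ "\<lambda>_. delta0"]) (simp add: fser_mult_delta0)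

lemma ideal_pull_zero:
  assumes c0: "\<forall>i. fps_nth (\<zeta> i) 0 = 0" and G: "\<forall>q\<in>G. pull_hol \<zeta> q = 0"
    and phi: "\<phi> \<in> fser_ideal (G::('n::finite) fser set)"
  shows "pull_hol \<zeta> \<phi> = 0"
proof -
  obtain S p where S: "finite S" "S \<subseteq> G" "\<phi> = (\<lambda>K. \<Sum>q\<in>S. fser_mult (p q) q K)"
    using phi unfolding fser_ideal_def by blast
  have "pull_hol \<zeta> \<phi> = (\<Sum>q\<in>S. pull_hol \<zeta> (fser_mult (p q) q))"
    unfolding S(3) by (rule pull_hol_sum)
  also have "\<dots> = (\<Sum>q\<in>S. pull_hol \<zeta> (p q) * pull_hol \<zeta> q)"
    by (simp add: pull_hol_mult[OF c0])
  also have "\<dots> = 0" using S(2) G by (auto intro!: sum.neutral)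
  finally show ?thesis .
qed


section \<open>The pullback identity\<close>

definition cm :: "('n::finite \<Rightarrow> complex fps) \<Rightarrow> 'n mi \<Rightarrow> nat \<Rightarrow> complex" where
  "cm \<zeta> J k = fps_nth (curve_mono \<zeta> J) k"

definition Qv :: "('n mi \<Rightarrow> 'n mi \<Rightarrow> complex) \<Rightarrow> ('n::{finite,linorder} \<Rightarrow> complex fps) \<Rightarrow> 'n mi \<Rightarrow> nat \<Rightarrow> complex" where
  "Qv a \<zeta> J k = (\<Sum>K\<in>Dset k. (if mi_le J K then cnj (a J K) else 0) * cm \<zeta> K k)"

lemma cm_low: "\<forall>i. fps_nth (\<zeta> i) 0 = 0 \<Longrightarrow> k < mi_deg J \<Longrightarrow> cm \<zeta> (J::('n::finite) mi) k = 0"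
  unfolding cm_def by (rule curve_mono_low)

lemma cm_zero: "cm \<zeta> (mi_zero::('n::finite) mi) k = (if k = 0 then 1 else 0)"
  unfolding cm_def curve_mono_zero by simp

lemma zero_in_Dset: "(mi_zero::('n::finite) mi) \<in> Dset k"
  unfolding Dset_def using mi_deg_eq0[of "mi_zero::'n mi"] by simp

lemma pull_hol_cm:
  assumes c0: "\<forall>i. fps_nth (\<zeta> i) 0 = 0" and T: "finite T" "Dset k \<subseteq> T"
  shows "fps_nth (pull_hol \<zeta> \<phi>) k = (\<Sum>J\<in>T. \<phi> J * cm \<zeta> (J::('n::finite) mi) k)"
  unfolding cm_def by (rule pull_hol_sup[OF c0 T])

lemma Fv_eq:
  assumes c0: "\<forall>i. fps_nth (\<zeta> i) 0 = 0"
  shows "fps_nth (pull_hol \<zeta> (fJ a J)) k = cm \<zeta> J k + Qv a \<zeta> (J::('n::{finite,linorder}) mi) k"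
proof -
  have "fps_nth (pull_hol \<zeta> (fJ a J)) k = (\<Sum>K\<in>Dset k. (if K = J then cm \<zeta> K k else 0)) + Qv a \<zeta> J k"
  proof -
    have "fps_nth (pull_hol \<zeta> (fJ a J)) k = (\<Sum>K\<in>Dset k. (if K = J then cm \<zeta> K k else 0) + (if mi_le J K then cnj (a J K) else 0) * cm \<zeta> K k)"
      unfolding pull_hol_nth fJ_def cm_def by (rule sum.cong) (auto simp: distrib_right)
    thus ?thesis unfolding Qv_def by (simp add: sum.distrib)
  qed
  also have "(\<Sum>K\<in>Dset k. (if K = J then cm \<zeta> K k else 0)) = (if J \<in> Dset k then cm \<zeta> J k else 0)"
    by (rule sum.delta[OF finite_Dset])
  also have "\<dots> = cm \<zeta> J k" using cm_low[OF c0, of k J] by (auto simp: Dset_def)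
  finally show ?thesis .
qed

lemma Gv_eq:
  assumes c0: "\<forall>i. fps_nth (\<zeta> i) 0 = 0"
  shows "fps_nth (pull_hol \<zeta> (gJ a J)) k = cm \<zeta> J k - Qv a \<zeta> (J::('n::{finite,linorder}) mi) k"
proof -
  have "fps_nth (pull_hol \<zeta> (gJ a J)) k = (\<Sum>K\<in>Dset k. (if K = J then cm \<zeta> K k else 0)) - Qv a \<zeta> J k"
  proof -
    have "fps_nth (pull_hol \<zeta> (gJ a J)) k = (\<Sum>K\<in>Dset k. (if K = J then cm \<zeta> K k else 0) - (if mi_le J K then cnj (a J K) else 0) * cm \<zeta> K k)"
      unfolding pull_hol_nth gJ_def cm_def by (rule sum.cong) (auto simp: left_diff_distrib)
    thus ?thesis unfolding Qv_def by (simp add: sum_subtractf)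
  qed
  also have "(\<Sum>K\<in>Dset k. (if K = J then cm \<zeta> K k else 0)) = (if J \<in> Dset k then cm \<zeta> J k else 0)"
    by (rule sum.delta[OF finite_Dset])
  also have "\<dots> = cm \<zeta> J k" using cm_low[OF c0, of k J] by (auto simp: Dset_def)
  finally show ?thesis .
qed

lemma repr_coeff_alt:
  "repr_coeff h a J (K::('n::{finite,linorder}) mi) =
     (if K = mi_zero then h J else 0) + (if J = mi_zero then cnj (h K) else 0) +
     (if J \<noteq> mi_zero \<and> K \<noteq> mi_zero then
        (if mi_le J K then 2 * a J K else 0) + (if mi_le K J then 2 * cnj (a K J) else 0) else 0)"
proof (cases "J = K")
  case True thus ?thesis unfolding repr_coeff_def mi_le_def by simp
next
  case False
  hence "mi_less J K \<or> mi_less K J" by (rule mi_less_total)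
  thus ?thesis unfolding repr_coeff_def mi_le_def using False mi_less_asym by auto
qed


lemma pull_real_identity:
  fixes c :: "('n::{finite,linorder}) mi \<Rightarrow> 'n mi \<Rightarrow> complex" and a :: "'n mi \<Rightarrow> 'n mi \<Rightarrow> complex"
    and h :: "'n fser" and \<zeta> :: "'n \<Rightarrow> complex fps"
  assumes c0: "\<forall>i. fps_nth (\<zeta> i) 0 = 0" and decomp: "\<forall>J K. c J K = repr_coeff h a J K"
  shows "pull_real \<zeta> c x y =
    (if y = 0 then fps_nth (pull_hol \<zeta> h) x else 0) + (if x = 0 then cnj (fps_nth (pull_hol \<zeta> h) y) else 0) +
    (\<Sum>J\<in>NZ (x+y). fps_nth (pull_hol \<zeta> (fJ a J)) x * cnj (fps_nth (pull_hol \<zeta> (fJ a J)) y)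
                    - fps_nth (pull_hol \<zeta> (gJ a J)) x * cnj (fps_nth (pull_hol \<zeta> (gJ a J)) y))"
proof -
  let ?T = "Dset (x+y) :: 'n mi set"
  let ?N = "NZ (x+y) :: 'n mi set"
  have fT: "finite ?T" by (rule finite_Dset)
  have fN: "finite ?N" by (rule finite_NZ)
  have NT: "?N = {J\<in>?T. J \<noteq> mi_zero}" by (auto simp: NZ_def Dset_def)
  have NsubT: "?N \<subseteq> ?T" by (auto simp: NZ_def Dset_def)
  have z: "mi_zero \<in> ?T" by (rule zero_in_Dset)
  define A where "A J K = cm \<zeta> J x * cnj (cm \<zeta> K y)" for J K :: "'n mi"
  have Alow1: "A J K = 0" if "J \<notin> Dset x" for J K using that cm_low[OF c0, of x J] by (simp add: A_def Dset_def)
  have Alow2: "A J K = 0" if "K \<notin> Dset y" for J K using that cm_low[OF c0, of y K] by (simp add: A_def Dset_def)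
  have Dx: "Dset x \<subseteq> ?T" and Dy: "Dset y \<subseteq> ?T" by (auto simp: Dset_def)
  have step1: "pull_real \<zeta> c x y = (\<Sum>J\<in>?T. \<Sum>K\<in>?T. c J K * A J K)"
  proof -
    have "pull_real \<zeta> c x y = (\<Sum>J\<in>Dset x. \<Sum>K\<in>Dset y. c J K * A J K)"
      unfolding pull_real_def A_def cm_def Dset_def by (simp add: mult_ac)
    also have "\<dots> = (\<Sum>J\<in>Dset x. \<Sum>K\<in>?T. c J K * A J K)"
    proof (rule sum.cong[OF refl])
      fix J show "(\<Sum>K\<in>Dset y. c J K * A J K) = (\<Sum>K\<in>?T. c J K * A J K)"
        by (rule sum.mono_neutral_left[OF fT Dy]) (simp add: Alow2)
    qed
    also have "\<dots> = (\<Sum>J\<in>?T. \<Sum>K\<in>?T. c J K * A J K)"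
      by (rule sum.mono_neutral_left[OF fT Dx]) (simp add: Alow1)
    finally show ?thesis .
  qed
  define c1 where "c1 J K = (if K = mi_zero then h J else 0)" for J K :: "'n mi"
  define c2 where "c2 J K = (if J = mi_zero then cnj (h K) else 0)" for J K :: "'n mi"
  define d1 where "d1 J K = (if mi_le J K then 2 * a J K else 0)" for J K :: "'n mi"
  define d2 where "d2 J K = (if mi_le K J then 2 * cnj (a K J) else 0)" for J K :: "'n mi"
  have cdec: "c J K = c1 J K + c2 J K + (if J \<noteq> mi_zero \<and> K \<noteq> mi_zero then d1 J K + d2 J K else 0)" for J K
    using decomp repr_coeff_alt[of h a J K] unfolding c1_def c2_def d1_def d2_def by simp
  have split: "(\<Sum>J\<in>?T. \<Sum>K\<in>?T. c J K * A J K) =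
     (\<Sum>J\<in>?T. \<Sum>K\<in>?T. c1 J K * A J K) + (\<Sum>J\<in>?T. \<Sum>K\<in>?T. c2 J K * A J K) +
     (\<Sum>J\<in>?T. \<Sum>K\<in>?T. (if J \<noteq> mi_zero \<and> K \<noteq> mi_zero then d1 J K + d2 J K else 0) * A J K)"
    unfolding cdec by (simp add: distrib_right sum.distrib)
  have pullx: "fps_nth (pull_hol \<zeta> h) x = (\<Sum>J\<in>?T. h J * cm \<zeta> J x)" by (rule pull_hol_cm[OF c0 fT Dx])
  have pully: "fps_nth (pull_hol \<zeta> h) y = (\<Sum>J\<in>?T. h J * cm \<zeta> J y)" by (rule pull_hol_cm[OF c0 fT Dy])
  have part1: "(\<Sum>J\<in>?T. \<Sum>K\<in>?T. c1 J K * A J K) = (if y = 0 then fps_nth (pull_hol \<zeta> h) x else 0)"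
  proof -
    have "(\<Sum>J\<in>?T. \<Sum>K\<in>?T. c1 J K * A J K) = (\<Sum>J\<in>?T. h J * A J mi_zero)"
    proof (rule sum.cong[OF refl])
      fix J
      have "(\<Sum>K\<in>?T. c1 J K * A J K) = (\<Sum>K\<in>?T. if K = mi_zero then h J * A J K else 0)"
        unfolding c1_def by (rule sum.cong) auto
      also have "\<dots> = h J * A J mi_zero" using sum.delta[OF fT, of mi_zero "\<lambda>K. h J * A J K"] z by simp
      finally show "(\<Sum>K\<in>?T. c1 J K * A J K) = h J * A J mi_zero" .
    qed
    also have "\<dots> = (if y = 0 then (\<Sum>J\<in>?T. h J * cm \<zeta> J x) else 0)"
      unfolding A_def cm_zero by simp
    finally show ?thesis using pullx by simp
  qed
  have part2: "(\<Sum>J\<in>?T. \<Sum>K\<in>?T. c2 J K * A J K) = (if x = 0 then cnj (fps_nth (pull_hol \<zeta> h) y) else 0)"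
  proof -
    have "(\<Sum>J\<in>?T. \<Sum>K\<in>?T. c2 J K * A J K) = (\<Sum>K\<in>?T. \<Sum>J\<in>?T. c2 J K * A J K)" by (rule sum.swap)
    also have "\<dots> = (\<Sum>K\<in>?T. cnj (h K) * A mi_zero K)"
    proof (rule sum.cong[OF refl])
      fix K
      have "(\<Sum>J\<in>?T. c2 J K * A J K) = (\<Sum>J\<in>?T. if J = mi_zero then cnj (h K) * A J K else 0)"
        unfolding c2_def by (rule sum.cong) auto
      also have "\<dots> = cnj (h K) * A mi_zero K" using sum.delta[OF fT, of mi_zero "\<lambda>J. cnj (h K) * A J K"] z by simp
      finally show "(\<Sum>J\<in>?T. c2 J K * A J K) = cnj (h K) * A mi_zero K" .
    qed
    also have "\<dots> = (if x = 0 then cnj (\<Sum>K\<in>?T. h K * cm \<zeta> K y) else 0)"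
      unfolding A_def cm_zero by simp
    finally show ?thesis using pully by simp
  qed
  have part3a: "(\<Sum>J\<in>?T. \<Sum>K\<in>?T. (if J \<noteq> mi_zero \<and> K \<noteq> mi_zero then d1 J K + d2 J K else 0) * A J K)
      = (\<Sum>J\<in>?N. \<Sum>K\<in>?N. d1 J K * A J K) + (\<Sum>J\<in>?N. \<Sum>K\<in>?N. d2 J K * A J K)"
  proof -
    have "(\<Sum>J\<in>?T. \<Sum>K\<in>?T. (if J \<noteq> mi_zero \<and> K \<noteq> mi_zero then d1 J K + d2 J K else 0) * A J K)
        = (\<Sum>J\<in>?T. if J \<noteq> mi_zero then (\<Sum>K\<in>?T. if K \<noteq> mi_zero then (d1 J K + d2 J K) * A J K else 0) else 0)"
      by (rule sum.cong[OF refl]) (auto intro!: sum.cong)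
    also have "\<dots> = (\<Sum>J\<in>?N. \<Sum>K\<in>?N. (d1 J K + d2 J K) * A J K)"
      unfolding NT by (simp add: sum.inter_filter[OF fT])
    finally show ?thesis by (simp add: distrib_right sum.distrib)
  qed
  have part3b: "(\<Sum>J\<in>?N. \<Sum>K\<in>?N. d1 J K * A J K) = (\<Sum>J\<in>?N. 2 * cm \<zeta> J x * cnj (Qv a \<zeta> J y))"
  proof (rule sum.cong[OF refl])
    fix J assume J: "J \<in> ?N"
    hence J0: "J \<noteq> mi_zero" by (simp add: NZ_def)
    have "2 * cm \<zeta> J x * cnj (Qv a \<zeta> J y) = (\<Sum>K\<in>Dset y. d1 J K * A J K)"
      unfolding Qv_def d1_def A_def by (simp add: sum_distrib_left) (rule sum.cong, auto)
    also have "\<dots> = (\<Sum>K\<in>?T. d1 J K * A J K)"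
      by (rule sum.mono_neutral_left[OF fT Dy]) (simp add: Alow2)
    also have "\<dots> = (\<Sum>K\<in>?N. d1 J K * A J K)"
    proof (rule sum.mono_neutral_right[OF fT NsubT], intro ballI)
      fix K assume "K \<in> ?T - ?N"
      hence "K = mi_zero" by (auto simp: NZ_def Dset_def)
      thus "d1 J K * A J K = 0" using mi_le_zero[OF J0] by (simp add: d1_def)
    qed
    finally show "(\<Sum>K\<in>?N. d1 J K * A J K) = 2 * cm \<zeta> J x * cnj (Qv a \<zeta> J y)" by simp
  qed
  have part3c: "(\<Sum>J\<in>?N. \<Sum>K\<in>?N. d2 J K * A J K) = (\<Sum>K\<in>?N. 2 * Qv a \<zeta> K x * cnj (cm \<zeta> K y))"
  proof -
    have "(\<Sum>J\<in>?N. \<Sum>K\<in>?N. d2 J K * A J K) = (\<Sum>K\<in>?N. \<Sum>J\<in>?N. d2 J K * A J K)" by (rule sum.swap)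
    also have "\<dots> = (\<Sum>K\<in>?N. 2 * Qv a \<zeta> K x * cnj (cm \<zeta> K y))"
    proof (rule sum.cong[OF refl])
      fix K assume K: "K \<in> ?N"
      hence K0: "K \<noteq> mi_zero" by (simp add: NZ_def)
      have "2 * Qv a \<zeta> K x * cnj (cm \<zeta> K y) = (\<Sum>J\<in>Dset x. d2 J K * A J K)"
        unfolding Qv_def d2_def A_def by (simp add: sum_distrib_left sum_distrib_right) (rule sum.cong, auto)
      also have "\<dots> = (\<Sum>J\<in>?T. d2 J K * A J K)"
        by (rule sum.mono_neutral_left[OF fT Dx]) (simp add: Alow1)
      also have "\<dots> = (\<Sum>J\<in>?N. d2 J K * A J K)"
      proof (rule sum.mono_neutral_right[OF fT NsubT], intro ballI)
        fix J assume "J \<in> ?T - ?N"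
        hence "J = mi_zero" by (auto simp: NZ_def Dset_def)
        thus "d2 J K * A J K = 0" using mi_le_zero[OF K0] by (simp add: d2_def)
      qed
      finally show "(\<Sum>J\<in>?N. d2 J K * A J K) = 2 * Qv a \<zeta> K x * cnj (cm \<zeta> K y)" by simp
    qed
    finally show ?thesis .
  qed
  have rhs: "(\<Sum>J\<in>?N. fps_nth (pull_hol \<zeta> (fJ a J)) x * cnj (fps_nth (pull_hol \<zeta> (fJ a J)) y)
                    - fps_nth (pull_hol \<zeta> (gJ a J)) x * cnj (fps_nth (pull_hol \<zeta> (gJ a J)) y))
     = (\<Sum>J\<in>?N. 2 * cm \<zeta> J x * cnj (Qv a \<zeta> J y)) + (\<Sum>K\<in>?N. 2 * Qv a \<zeta> K x * cnj (cm \<zeta> K y))"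
    unfolding Fv_eq[OF c0] Gv_eq[OF c0] sum.distrib[symmetric]
    by (rule sum.cong[OF refl]) (simp add: algebra_simps)
  show ?thesis
    unfolding step1 split part1 part2 part3a part3b part3c rhs by simp
qed


section \<open>Finite-dimensional unitary algebra\<close>

definition ip :: "nat \<Rightarrow> (nat \<Rightarrow> complex) \<Rightarrow> (nat \<Rightarrow> complex) \<Rightarrow> complex" where
  "ip M u v = (\<Sum>i<M. u i * cnj (v i))"
definition mm :: "nat \<Rightarrow> imat \<Rightarrow> imat \<Rightarrow> imat" where
  "mm M A B = (\<lambda>i k. \<Sum>j<M. A i j * B j k)"
definition mv :: "nat \<Rightarrow> imat \<Rightarrow> (nat \<Rightarrow> complex) \<Rightarrow> (nat \<Rightarrow> complex)" where
  "mv M A x = (\<lambda>i. \<Sum>j<M. A i j * x j)"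
definition unit :: "nat \<Rightarrow> imat \<Rightarrow> bool" where
  "unit M A \<longleftrightarrow> (\<forall>i<M. \<forall>k<M. mm M A (mat_adj A) i k = mat_id i k \<and> mm M (mat_adj A) A i k = mat_id i k)"

lemma mv_mm: "mv M (mm M A B) x i = mv M A (mv M B x) i"
proof -
  have "mv M (mm M A B) x i = (\<Sum>j<M. \<Sum>l<M. A i l * B l j * x j)"
    unfolding mv_def mm_def by (simp add: sum_distrib_right)
  also have "\<dots> = (\<Sum>l<M. \<Sum>j<M. A i l * B l j * x j)" by (rule sum.swap)
  also have "\<dots> = mv M A (mv M B x) i"
    unfolding mv_def by (simp add: sum_distrib_left mult_ac)
  finally show ?thesis .
qed

lemma mv_cong: "(\<And>j. j < M \<Longrightarrow> x j = y j) \<Longrightarrow> mv M A x i = mv M A y i"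
  unfolding mv_def by (rule sum.cong) auto

lemma ip_cong: "(\<And>j. j < M \<Longrightarrow> u j = u' j) \<Longrightarrow> (\<And>j. j < M \<Longrightarrow> v j = v' j) \<Longrightarrow> ip M u v = ip M u' v'"
  unfolding ip_def by (rule sum.cong) auto

lemma ip_cnj: "ip M u v = cnj (ip M v u)"
  unfolding ip_def by (simp add: mult.commute)

lemma mat_id_mult1: "mat_id i j * (y::complex) = (if i = j then y else 0)"
  unfolding mat_id_def by simp
lemma mat_id_mult2: "(y::complex) * mat_id i j = (if i = j then y else 0)"
  unfolding mat_id_def by simp

lemma mm_id_left: "i < M \<Longrightarrow> mm M mat_id A i k = A i k"
  unfolding mm_def by (simp add: mat_id_mult1 sum.delta)

lemma mv_id: "i < M \<Longrightarrow> mv M mat_id x i = x i"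
  unfolding mv_def by (simp add: mat_id_mult1 sum.delta)

lemma ip_mv_unit:
  assumes "unit M A"
  shows "ip M (mv M A u) (mv M A v) = ip M u v"
proof -
  have AA: "(\<Sum>i<M. A i j * cnj (A i l)) = mat_id j l" if "j < M" "l < M" for j l
  proof -
    have "mm M (mat_adj A) A j l = mat_id j l" using assms that unfolding unit_def by blast
    hence "cnj (\<Sum>i<M. cnj (A i j) * A i l) = cnj (mat_id j l)" unfolding mm_def mat_adj_def by simp
    thus ?thesis by (simp add: mat_id_def mult.commute)
  qed
  have "ip M (mv M A u) (mv M A v) = (\<Sum>i<M. \<Sum>l<M. \<Sum>j<M. u j * (A i j * (cnj (v l) * cnj (A i l))))"
    unfolding ip_def mv_def by (simp add: sum_distrib_left sum_distrib_right mult_ac)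
  also have "\<dots> = (\<Sum>l<M. \<Sum>i<M. \<Sum>j<M. u j * (A i j * (cnj (v l) * cnj (A i l))))"
    by (rule sum.swap)
  also have "\<dots> = (\<Sum>l<M. \<Sum>j<M. \<Sum>i<M. u j * (A i j * (cnj (v l) * cnj (A i l))))"
    by (rule sum.cong[OF refl], rule sum.swap)
  also have "\<dots> = (\<Sum>j<M. \<Sum>l<M. \<Sum>i<M. u j * (A i j * (cnj (v l) * cnj (A i l))))"
    by (rule sum.swap)
  also have "\<dots> = (\<Sum>j<M. \<Sum>l<M. \<Sum>i<M. u j * cnj (v l) * (A i j * cnj (A i l)))"
    by (simp add: mult_ac)
  also have "\<dots> = (\<Sum>j<M. \<Sum>l<M. u j * cnj (v l) * mat_id j l)"
    by (intro sum.cong refl) (simp add: sum_distrib_left[symmetric] AA)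
  also have "\<dots> = ip M u v"
    unfolding ip_def by (simp add: mat_id_mult2 sum.delta)
  finally show ?thesis .
qed

lemma mv_adj_mv:
  assumes "unit M A" "i < M"
  shows "mv M (mat_adj A) (mv M A x) i = x i"
proof -
  have "mv M (mat_adj A) (mv M A x) i = mv M (mm M (mat_adj A) A) x i" by (simp add: mv_mm)
  also have "\<dots> = mv M mat_id x i"
    unfolding mv_def
  proof (rule sum.cong[OF refl])
    fix j assume "j \<in> {..<M}"
    thus "mm M (mat_adj A) A i j * x j = mat_id i j * x j" using assms unfolding unit_def by simp
  qed
  also have "\<dots> = x i" using assms(2) by (rule mv_id)
  finally show ?thesis .
qed


lemma mm_assoc: "mm M (mm M X Y) Z i k = mm M X (mm M Y Z) i k"
proof -
  have "mm M (mm M X Y) Z i k = (\<Sum>l<M. \<Sum>j<M. X i j * Y j l * Z l k)"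
    unfolding mm_def by (simp add: sum_distrib_right)
  also have "\<dots> = (\<Sum>j<M. \<Sum>l<M. X i j * Y j l * Z l k)" by (rule sum.swap)
  also have "\<dots> = mm M X (mm M Y Z) i k" unfolding mm_def by (simp add: sum_distrib_left mult_ac)
  finally show ?thesis .
qed

lemma mm_cong_left: "(\<And>j. j < M \<Longrightarrow> X i j = X' i j) \<Longrightarrow> mm M X Y i k = mm M X' Y i k"
  unfolding mm_def by (rule sum.cong) auto

lemma mm_cong_right: "(\<And>j. j < M \<Longrightarrow> Y j k = Y' j k) \<Longrightarrow> mm M X Y i k = mm M X Y' i k"
  unfolding mm_def by (rule sum.cong) auto

lemma adj_mm: "mat_adj (mm M A B) = mm M (mat_adj B) (mat_adj A)"
  unfolding mat_adj_def mm_def by (simp add: fun_eq_iff mult.commute)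

lemma adj_adj: "mat_adj (mat_adj A) = A"
  unfolding mat_adj_def by simp

lemma adj_id: "mat_adj mat_id = mat_id"
  unfolding mat_adj_def mat_id_def by (simp add: fun_eq_iff)

lemma unit_sym: "unit M A \<Longrightarrow> unit M (mat_adj A)"
  unfolding unit_def adj_adj by blast

lemma unit_id: "unit M mat_id"
  unfolding unit_def adj_id using mm_id_left by simp

lemma unit_half_mm:
  assumes A: "\<forall>i<M. \<forall>k<M. mm M A (mat_adj A) i k = mat_id i k"
    and B: "\<forall>i<M. \<forall>k<M. mm M B (mat_adj B) i k = mat_id i k"
    and ik: "i < M" "k < M"
  shows "mm M (mm M A B) (mat_adj (mm M A B)) i k = mat_id i k"
proof -
  have inner: "mm M B (mm M (mat_adj B) (mat_adj A)) j k = mat_adj A j k" if j: "j < M" for j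
  proof -
    have "mm M B (mm M (mat_adj B) (mat_adj A)) j k = mm M (mm M B (mat_adj B)) (mat_adj A) j k"
      by (simp add: mm_assoc)
    also have "\<dots> = mm M mat_id (mat_adj A) j k"
      by (rule mm_cong_left) (use B j in simp)
    also have "\<dots> = mat_adj A j k" using j by (rule mm_id_left)
    finally show ?thesis .
  qed
  have "mm M (mm M A B) (mat_adj (mm M A B)) i k = mm M A (mm M B (mm M (mat_adj B) (mat_adj A))) i k"
    unfolding adj_mm by (simp add: mm_assoc)
  also have "\<dots> = mm M A (mat_adj A) i k"
    by (rule mm_cong_right) (use inner in simp)
  also have "\<dots> = mat_id i k" using A ik by simp
  finally show ?thesis .
qed

lemma unit_mm: "unit M A \<Longrightarrow> unit M B \<Longrightarrow> unit M (mm M A B)"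
proof -
  assume A: "unit M A" and B: "unit M B"
  have h1: "\<forall>i<M. \<forall>k<M. mm M (mm M A B) (mat_adj (mm M A B)) i k = mat_id i k"
    using unit_half_mm[of M A B] A B unfolding unit_def by blast
  have A': "\<forall>i<M. \<forall>k<M. mm M (mat_adj B) (mat_adj (mat_adj B)) i k = mat_id i k"
    using B unfolding unit_def adj_adj by blast
  have B': "\<forall>i<M. \<forall>k<M. mm M (mat_adj A) (mat_adj (mat_adj A)) i k = mat_id i k"
    using A unfolding unit_def adj_adj by blast
  have h2: "\<forall>i<M. \<forall>k<M. mm M (mat_adj (mm M A B)) (mm M A B) i k = mat_id i k"
  proof (intro allI impI)
    fix i k assume ik: "i < M" "k < M"
    have "mm M (mat_adj (mm M A B)) (mm M A B) i k =
          mm M (mm M (mat_adj B) (mat_adj A)) (mat_adj (mm M (mat_adj B) (mat_adj A))) i k"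
      unfolding adj_mm adj_adj by simp
    also have "\<dots> = mat_id i k" by (rule unit_half_mm[OF A' B' ik])
    finally show "mm M (mat_adj (mm M A B)) (mm M A B) i k = mat_id i k" .
  qed
  show ?thesis using h1 h2 unfolding unit_def by blast
qed

definition Rk :: "complex \<Rightarrow> (nat \<Rightarrow> complex) \<Rightarrow> imat" where
  "Rk \<alpha> w = (\<lambda>i j. mat_id i j + \<alpha> * w i * cnj (w j))"

lemma Rk_mult:
  assumes "i < M" "k < M"
  shows "mm M (Rk \<alpha> w) (Rk \<beta> w) i k = mat_id i k + (\<alpha> + \<beta> + \<alpha> * \<beta> * ip M w w) * w i * cnj (w k)"
proof -
  have "mm M (Rk \<alpha> w) (Rk \<beta> w) i k = (\<Sum>j<M. mat_id i j * mat_id j k) + (\<Sum>j<M. mat_id i j * (\<beta> * w j * cnj (w k)))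
     + (\<Sum>j<M. \<alpha> * w i * cnj (w j) * mat_id j k) + (\<Sum>j<M. \<alpha> * \<beta> * w i * cnj (w k) * (w j * cnj (w j)))"
    unfolding mm_def Rk_def by (simp add: sum.distrib[symmetric] algebra_simps)
  also have "\<dots> = mat_id i k + \<beta> * w i * cnj (w k) + \<alpha> * w i * cnj (w k) + \<alpha> * \<beta> * w i * cnj (w k) * ip M w w"
    using assms unfolding ip_def by (simp add: mat_id_mult1 mat_id_mult2 sum.delta sum.delta' sum_distrib_left)
  finally show ?thesis by (simp add: algebra_simps)
qed

lemma adj_Rk: "mat_adj (Rk \<alpha> w) = Rk (cnj \<alpha>) w"
  unfolding mat_adj_def Rk_def mat_id_def by (simp add: fun_eq_iff mult_ac)

lemma unit_Rk:
  assumes "\<alpha> + cnj \<alpha> + \<alpha> * cnj \<alpha> * ip M w w = 0"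
  shows "unit M (Rk \<alpha> w)"
  unfolding unit_def adj_Rk
proof (intro allI impI conjI)
  fix i k assume ik: "i < M" "k < M"
  show "mm M (Rk \<alpha> w) (Rk (cnj \<alpha>) w) i k = mat_id i k"
    using Rk_mult[OF ik] assms by simp
  have "cnj \<alpha> + \<alpha> + cnj \<alpha> * \<alpha> * ip M w w = 0" using assms by (simp add: algebra_simps)
  thus "mm M (Rk (cnj \<alpha>) w) (Rk \<alpha> w) i k = mat_id i k"
    using Rk_mult[OF ik] by simp
qed

lemma Rk_map:
  assumes "i < M" shows "mv M (Rk \<alpha> w) x i = x i + \<alpha> * ip M x w * w i"
proof -
  have "mv M (Rk \<alpha> w) x i = (\<Sum>j<M. mat_id i j * x j) + (\<Sum>j<M. \<alpha> * w i * (x j * cnj (w j)))"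
    unfolding mv_def Rk_def sum.distrib[symmetric] by (rule sum.cong) (auto simp: algebra_simps)
  also have "(\<Sum>j<M. mat_id i j * x j) = x i" using assms by (simp add: mat_id_mult1 sum.delta)
  also have "(\<Sum>j<M. \<alpha> * w i * (x j * cnj (w j))) = \<alpha> * ip M x w * w i"
    unfolding ip_def by (simp add: sum_distrib_left mult_ac)
  finally show ?thesis .
qed


lemma ip_diff_right: "ip M u (\<lambda>i. v i - v' i) = ip M u v - ip M u v'"
  unfolding ip_def by (simp add: algebra_simps sum_subtractf)

lemma ip_diff_left: "ip M (\<lambda>i. u i - u' i) v = ip M u v - ip M u' v"
  unfolding ip_def by (simp add: algebra_simps sum_subtractf)

lemma ip_self: "ip M w w = of_real (\<Sum>i<M. (cmod (w i))\<^sup>2)"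
  unfolding ip_def of_real_sum by (rule sum.cong[OF refl], rule complex_norm_square[symmetric])

lemma ip_self_zero:
  assumes "ip M w w = 0" "i < M" shows "w i = 0"
proof -
  have "(\<Sum>i<M. (cmod (w i))\<^sup>2) = 0" using assms(1) unfolding ip_self by (simp only: of_real_eq_0_iff)
  hence "\<forall>i\<in>{..<M}. (cmod (w i))\<^sup>2 = 0" by (subst sum_nonneg_eq_0_iff[symmetric]) auto
  thus ?thesis using assms(2) by simp
qed

lemma finite_construct:
  fixes X Y :: "nat \<Rightarrow> nat \<Rightarrow> complex"
  assumes "\<forall>a<n. \<forall>b<n. ip M (Y a) (Y b) = ip M (X a) (X b)"
  shows "\<exists>A. unit M A \<and> (\<forall>a<n. \<forall>i<M. mv M A (X a) i = Y a i)"
  using assms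
proof (induction n)
  case 0 show ?case using unit_id by blast
next
  case (Suc n)
  from Suc.prems have gram: "\<forall>a<Suc n. \<forall>b<Suc n. ip M (Y a) (Y b) = ip M (X a) (X b)" .
  then obtain A where A: "unit M A" and Yb: "\<forall>a<n. \<forall>i<M. mv M A (X a) i = Y a i"
    using Suc.IH by (metis less_SucI)
  define x where "x = mv M A (X n)"
  define y where "y = Y n"
  define w where "w = (\<lambda>i. x i - y i)"
  define t where "t = ip M x w"
  have g1: "ip M x x = ip M y y"
    unfolding x_def y_def using ip_mv_unit[OF A] gram by simp
  have g2: "ip M x (Y b) = ip M y (Y b)" if b: "b < n" for b
  proof -
    have "ip M x (Y b) = ip M x (mv M A (X b))" by (rule ip_cong) (use Yb b in auto)
    also have "\<dots> = ip M (X n) (X b)" unfolding x_def by (rule ip_mv_unit[OF A])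
    also have "\<dots> = ip M y (Y b)" unfolding y_def using gram b by simp
    finally show ?thesis .
  qed
  have wperp: "ip M (Y b) w = 0" if b: "b < n" for b
  proof -
    have "ip M (Y b) w = cnj (ip M x (Y b)) - cnj (ip M y (Y b))"
      unfolding w_def ip_diff_right by (simp add: ip_cnj[of M "Y b"])
    thus ?thesis using g2[OF b] by simp
  qed
  have ww: "ip M w w = t + cnj t"
  proof -
    have c1: "cnj (ip M x x) = ip M x x" by (rule ip_cnj[symmetric])
    have c2: "cnj (ip M x y) = ip M y x" by (simp add: ip_cnj[of M y x])
    show ?thesis unfolding t_def w_def ip_diff_left ip_diff_right using g1 c1 c2 by simp
  qed
  show ?case
  proof (cases "t = 0")
    case True
    hence "ip M w w = 0" using ww by simp
    hence "\<forall>i<M. x i = y i" using ip_self_zero unfolding w_def by fastforce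
    hence "\<forall>a<Suc n. \<forall>i<M. mv M A (X a) i = Y a i" using Yb unfolding x_def y_def
      by (metis less_Suc_eq)
    thus ?thesis using A by blast
  next
    case False
    define \<alpha> where "\<alpha> = - 1 / t"
    have ct: "cnj t \<noteq> 0" using False by simp
    have cond: "\<alpha> + cnj \<alpha> + \<alpha> * cnj \<alpha> * ip M w w = 0"
      unfolding ww \<alpha>_def using False ct by (simp add: field_simps)
    define A' where "A' = mm M (Rk \<alpha> w) A"
    have U': "unit M A'" unfolding A'_def by (rule unit_mm[OF unit_Rk[OF cond] A])
    have "\<forall>a<Suc n. \<forall>i<M. mv M A' (X a) i = Y a i"
    proof (intro allI impI)
      fix a i assume a: "a < Suc n" and i: "i < M"
      have "mv M A' (X a) i = mv M (Rk \<alpha> w) (mv M A (X a)) i" unfolding A'_def by (rule mv_mm)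
      show "mv M A' (X a) i = Y a i"
      proof (cases "a < n")
        case True
        have "mv M (Rk \<alpha> w) (mv M A (X a)) i = mv M (Rk \<alpha> w) (Y a) i"
          by (rule mv_cong) (use Yb True in auto)
        also have "\<dots> = Y a i" using Rk_map[OF i] wperp[OF True] by simp
        finally show ?thesis using \<open>mv M A' (X a) i = _\<close> by simp
      next
        case False
        hence an: "a = n" using a by simp
        have "mv M (Rk \<alpha> w) (mv M A (X a)) i = x i + \<alpha> * t * w i"
          unfolding an x_def[symmetric] t_def using Rk_map[OF i] by simp
        also have "\<dots> = y i" unfolding \<alpha>_def w_def using \<open>t \<noteq> 0\<close> by simp
        finally show ?thesis using \<open>mv M A' (X a) i = _\<close> an y_def by simp
      qed
    qed
    thus ?thesis using U' by blast
  qed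
qed


section \<open>Embedding finite unitaries into infinite matrices\<close>

definition Emb :: "nat \<Rightarrow> imat \<Rightarrow> imat" where
  "Emb M A = (\<lambda>i j. if i < M \<and> j < M then A i j else mat_id i j)"

lemma Emb_adj: "mat_adj (Emb M A) = Emb M (mat_adj A)"
  unfolding Emb_def mat_adj_def mat_id_def by (auto simp: fun_eq_iff)

lemma Emb_supp: "j \<notin> {..<M} \<union> {i} \<Longrightarrow> Emb M A i j = 0"
  unfolding Emb_def mat_id_def by auto

lemma suminf_supp: "finite S \<Longrightarrow> (\<And>j. j \<notin> S \<Longrightarrow> f j = 0) \<Longrightarrow> summable f \<and> suminf f = sum f S"
  for f :: "nat \<Rightarrow> 'a::{t2_space,comm_monoid_add,topological_comm_monoid_add}"
  using sums_finite[of S f] by (auto simp: sums_iff)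

lemma Emb_mult_entry:
  assumes half: "\<forall>i<M. \<forall>k<M. mm M A (mat_adj A) i k = mat_id i k"
  shows "(\<Sum>j\<in>{..<M} \<union> {i}. Emb M A i j * cnj (Emb M A k j)) = mat_id i k"
proof (cases "i < M")
  case True
  hence S: "{..<M} \<union> {i} = {..<M}" by auto
  show ?thesis
  proof (cases "k < M")
    case True
    have "(\<Sum>j\<in>{..<M}. Emb M A i j * cnj (Emb M A k j)) = mm M A (mat_adj A) i k"
      unfolding mm_def mat_adj_def Emb_def using \<open>i < M\<close> True by (intro sum.cong) auto
    thus ?thesis using S half \<open>i < M\<close> True by simp
  next
    case False
    have "(\<Sum>j\<in>{..<M}. Emb M A i j * cnj (Emb M A k j)) = 0"
      using False by (intro sum.neutral) (auto simp: Emb_def mat_id_def)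
    thus ?thesis using S False \<open>i < M\<close> by (simp add: mat_id_def)
  qed
next
  case False
  have "(\<Sum>j\<in>{..<M} \<union> {i}. Emb M A i j * cnj (Emb M A k j)) =
        (\<Sum>j\<in>{..<M}. Emb M A i j * cnj (Emb M A k j)) + Emb M A i i * cnj (Emb M A k i)"
    using False by (subst sum.union_disjoint) auto
  also have "(\<Sum>j\<in>{..<M}. Emb M A i j * cnj (Emb M A k j)) = 0"
    using False by (intro sum.neutral) (auto simp: Emb_def mat_id_def)
  also have "Emb M A i i * cnj (Emb M A k i) = mat_id i k"
    using False by (auto simp: Emb_def mat_id_def)
  finally show ?thesis by simp
qed

lemma Emb_mult:
  assumes half: "\<forall>i<M. \<forall>k<M. mm M A (mat_adj A) i k = mat_id i k"
  shows "mat_mult (Emb M A) (mat_adj (Emb M A)) = mat_id"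
proof (intro ext)
  fix i k
  have "mat_mult (Emb M A) (mat_adj (Emb M A)) i k = (\<Sum>j. Emb M A i j * cnj (Emb M A k j))"
    unfolding mat_mult_def mat_adj_def by simp
  also have "\<dots> = (\<Sum>j\<in>{..<M} \<union> {i}. Emb M A i j * cnj (Emb M A k j))"
    by (rule suminf_supp[THEN conjunct2]) (auto simp: Emb_supp)
  also have "\<dots> = mat_id i k" by (rule Emb_mult_entry[OF half])
  finally show "mat_mult (Emb M A) (mat_adj (Emb M A)) i k = mat_id i k" .
qed

lemma Emb_row:
  assumes half: "\<forall>i<M. \<forall>k<M. mm M A (mat_adj A) i k = mat_id i k"
  shows "summable (\<lambda>j. (cmod (Emb M A i j))\<^sup>2) \<and> (\<Sum>j. (cmod (Emb M A i j))\<^sup>2) = 1"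
proof -
  have sm: "summable (\<lambda>j. (cmod (Emb M A i j))\<^sup>2) \<and> (\<Sum>j. (cmod (Emb M A i j))\<^sup>2) = (\<Sum>j\<in>{..<M} \<union> {i}. (cmod (Emb M A i j))\<^sup>2)"
    by (rule suminf_supp) (auto simp: Emb_supp)
  have "complex_of_real (\<Sum>j\<in>{..<M} \<union> {i}. (cmod (Emb M A i j))\<^sup>2) = (\<Sum>j\<in>{..<M} \<union> {i}. Emb M A i j * cnj (Emb M A i j))"
    unfolding of_real_sum by (rule sum.cong[OF refl], rule complex_norm_square)
  also have "\<dots> = 1" using Emb_mult_entry[OF half, of i i] by (simp add: mat_id_def)
  finally have "(\<Sum>j\<in>{..<M} \<union> {i}. (cmod (Emb M A i j))\<^sup>2) = 1" by (simp only: of_real_eq_1_iff)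
  thus ?thesis using sm by simp
qed

lemma Emb_M1:
  assumes U: "unit M A"
  shows "Emb M A \<in> M1"
proof -
  have h1: "\<forall>i<M. \<forall>k<M. mm M A (mat_adj A) i k = mat_id i k" using U unfolding unit_def by blast
  have h2: "\<forall>i<M. \<forall>k<M. mm M (mat_adj A) (mat_adj (mat_adj A)) i k = mat_id i k"
    using U unfolding unit_def adj_adj by blast
  have rows: "summable (\<lambda>j. (cmod (Emb M A i j))\<^sup>2) \<and> (\<Sum>j. (cmod (Emb M A i j))\<^sup>2) = 1" for i
    by (rule Emb_row[OF h1])
  have cols: "summable (\<lambda>i. (cmod (Emb M A i j))\<^sup>2) \<and> (\<Sum>i. (cmod (Emb M A i j))\<^sup>2) = 1" for j
  proof -
    have e: "cmod (Emb M A i j) = cmod (Emb M (mat_adj A) j i)" for i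
      using Emb_adj[of M A] by (metis complex_mod_cnj mat_adj_def)
    show ?thesis unfolding e by (rule Emb_row[OF h2])
  qed
  have m0: "Emb M A \<in> M0" unfolding M0_def using rows cols by simp
  have p1: "mat_mult (Emb M A) (mat_adj (Emb M A)) = mat_id" by (rule Emb_mult[OF h1])
  have p2: "mat_mult (mat_adj (Emb M A)) (mat_adj (mat_adj (Emb M A))) = mat_id"
    using Emb_mult[OF h2] by (simp add: Emb_adj)
  show ?thesis unfolding M1_def using m0 p1 p2 adj_adj by simp
qed


section \<open>Diagonal subsequence\<close>

lemma bounded_conv_subseq:
  fixes z :: "nat \<Rightarrow> complex"
  assumes "\<forall>n. cmod (z n) \<le> 1"
  shows "\<exists>r. strict_mono r \<and> convergent (z \<circ> r)"
proof -
  have sc: "seq_compact (cball (0::complex) 1)" by (rule compact_imp_seq_compact) simp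
  have "\<forall>n. z n \<in> cball 0 1" using assms by simp
  then obtain l r where "strict_mono (r :: nat \<Rightarrow> nat)" "(z \<circ> r) \<longlonglongrightarrow> l"
    using seq_compactE[OF sc] by metis
  thus ?thesis unfolding convergent_def by blast
qed

lemma diag_conv:
  fixes V :: "nat \<Rightarrow> imat"
  assumes bnd: "\<forall>n i j. cmod (V n i j) \<le> 1"
  shows "\<exists>r U. strict_mono r \<and> (\<forall>i j. (\<lambda>k. V (r k) i j) \<longlonglongrightarrow> U i j)"
proof -
  define P where "P = (\<lambda>p (s::nat \<Rightarrow> nat). convergent (\<lambda>k. V (s k) (fst (prod_decode p)) (snd (prod_decode p))))"
  interpret subseqs P
  proof
    fix p and s :: "nat \<Rightarrow> nat" assume "strict_mono s"
    obtain r where r: "strict_mono r" "convergent ((\<lambda>k. V (s k) (fst (prod_decode p)) (snd (prod_decode p))) \<circ> r)"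
      using bounded_conv_subseq[of "\<lambda>k. V (s k) (fst (prod_decode p)) (snd (prod_decode p))"] bnd by blast
    show "\<exists>r'. strict_mono r' \<and> P p (s \<circ> r')"
      using r unfolding P_def by (intro exI[of _ r]) (simp add: o_def)
  qed
  have stable: "P n (s \<circ> r)" if "strict_mono r" "P n s" for r s n
  proof -
    from that(2) obtain L where "(\<lambda>k. V (s k) (fst (prod_decode n)) (snd (prod_decode n))) \<longlonglongrightarrow> L"
      unfolding P_def convergent_def by blast
    from LIMSEQ_subseq_LIMSEQ[OF this that(1)] show ?thesis
      unfolding P_def convergent_def by (auto simp: o_def)
  qed
  have conv: "convergent (\<lambda>k. V (diagseq k) i j)" for i j
  proof -
    define p where "p = prod_encode (i, j)"
    have "P p (diagseq \<circ> ((+) (Suc p)))" by (rule diagseq_holds) (rule stable)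
    hence "convergent (\<lambda>k. V (diagseq (k + Suc p)) i j)"
      unfolding P_def p_def by (simp add: o_def add.commute)
    thus ?thesis by (rule convergent_ignore_initial_segment[THEN iffD1])
  qed
  show ?thesis
    using subseq_diagseq conv unfolding convergent_def by metis
qed


section \<open>Construction of U\<close>

lemma M0_row_partial:
  assumes "V \<in> M0" shows "(\<Sum>j<L. (cmod (V i j))\<^sup>2) \<le> 1"
proof -
  have "summable (\<lambda>j. (cmod (V i j))\<^sup>2)" "(\<Sum>j. (cmod (V i j))\<^sup>2) \<le> 1" using assms unfolding M0_def by auto
  thus ?thesis using sum_le_suminf[of "\<lambda>j. (cmod (V i j))\<^sup>2" "{..<L}"] by simp
qed

lemma M0_col_partial:
  assumes "V \<in> M0" shows "(\<Sum>i<L. (cmod (V i j))\<^sup>2) \<le> 1"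
proof -
  have "summable (\<lambda>i. (cmod (V i j))\<^sup>2)" "(\<Sum>i. (cmod (V i j))\<^sup>2) \<le> 1" using assms unfolding M0_def by auto
  thus ?thesis using sum_le_suminf[of "\<lambda>i. (cmod (V i j))\<^sup>2" "{..<L}"] by simp
qed

lemma M0_entry: "V \<in> M0 \<Longrightarrow> cmod (V i j) \<le> 1"
proof -
  assume "V \<in> M0"
  hence "(\<Sum>j'<Suc j. (cmod (V i j'))\<^sup>2) \<le> 1" by (rule M0_row_partial)
  moreover have "(cmod (V i j))\<^sup>2 \<le> (\<Sum>j'<Suc j. (cmod (V i j'))\<^sup>2)"
    by (rule member_le_sum) auto
  ultimately have "(cmod (V i j))\<^sup>2 \<le> 1\<^sup>2" by simp
  thus ?thesis by (rule power2_le_imp_le) simp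
qed

lemma partial_bounded_sum:
  fixes f :: "nat \<Rightarrow> real"
  assumes "\<forall>j. 0 \<le> f j" "\<forall>L. (\<Sum>j<L. f j) \<le> 1"
  shows "summable f \<and> suminf f \<le> 1"
proof -
  have "summable f" by (rule summableI_nonneg_bounded[of f 1]) (use assms in auto)
  moreover have "suminf f \<le> 1" by (rule suminf_le_const[OF \<open>summable f\<close>]) (use assms in auto)
  ultimately show ?thesis by simp
qed

lemma construct_U:
  fixes X Y :: "nat \<Rightarrow> nat \<Rightarrow> complex" and S :: "nat \<Rightarrow> nat"
  assumes suppX: "\<forall>a i. S a \<le> i \<longrightarrow> X a i = 0" and suppY: "\<forall>a i. S a \<le> i \<longrightarrow> Y a i = 0"
    and gram: "\<forall>a b M. S a \<le> M \<longrightarrow> S b \<le> M \<longrightarrow> ip M (Y a) (Y b) = ip M (X a) (X b)"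
  shows "\<exists>U. U \<in> M0 \<and> weak_limit_M1 U \<and>
     (\<forall>a i. (\<Sum>m<S a. U i m * X a m) = Y a i \<and> (\<Sum>m<S a. cnj (U m i) * Y a m) = X a i)"
proof -
  define Mn where "Mn n = (\<Sum>a<n. S a)" for n
  have Sle: "S a \<le> Mn n" if "a < n" for a n
    unfolding Mn_def using that by (intro member_le_sum) auto
  have "\<exists>A. unit (Mn n) A \<and> (\<forall>a<n. \<forall>i<Mn n. mv (Mn n) A (X a) i = Y a i)" for n
    by (rule finite_construct) (use gram Sle in auto)
  then obtain Af where Af: "\<And>n. unit (Mn n) (Af n)"
    and Afmap: "\<And>n a i. a < n \<Longrightarrow> i < Mn n \<Longrightarrow> mv (Mn n) (Af n) (X a) i = Y a i"
    by metis
  define V where "V n = Emb (Mn n) (Af n)" for n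
  have VM1: "V n \<in> M1" for n unfolding V_def by (rule Emb_M1[OF Af])
  hence VM0: "V n \<in> M0" for n unfolding M1_def by auto
  have eq1: "(\<Sum>m<S a. V n i m * X a m) = Y a i" if an: "a < n" for a n i
  proof (cases "i < Mn n")
    case True
    have "(\<Sum>m<S a. V n i m * X a m) = (\<Sum>m<S a. Af n i m * X a m)"
      unfolding V_def Emb_def using True Sle[OF an] by (intro sum.cong) auto
    also have "\<dots> = (\<Sum>m<Mn n. Af n i m * X a m)"
      by (rule sum.mono_neutral_left) (use Sle[OF an] suppX in auto)
    also have "\<dots> = Y a i" using Afmap[OF an True] unfolding mv_def by simp
    finally show ?thesis .
  next
    case False
    have "(\<Sum>m<S a. V n i m * X a m) = 0"
      unfolding V_def Emb_def mat_id_def using False Sle[OF an] by (intro sum.neutral) auto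
    thus ?thesis using suppY False Sle[OF an] by simp
  qed
  have eq2: "(\<Sum>m<S a. cnj (V n m i) * Y a m) = X a i" if an: "a < n" for a n i
  proof (cases "i < Mn n")
    case True
    have "(\<Sum>m<S a. cnj (V n m i) * Y a m) = (\<Sum>m<S a. cnj (Af n m i) * Y a m)"
      unfolding V_def Emb_def using True Sle[OF an] by (intro sum.cong) auto
    also have "\<dots> = (\<Sum>m<Mn n. cnj (Af n m i) * Y a m)"
      by (rule sum.mono_neutral_left) (use Sle[OF an] suppY in auto)
    also have "\<dots> = (\<Sum>m<Mn n. mat_adj (Af n) i m * mv (Mn n) (Af n) (X a) m)"
      by (rule sum.cong[OF refl]) (simp add: Afmap[OF an] mat_adj_def)
    also have "\<dots> = mv (Mn n) (mat_adj (Af n)) (mv (Mn n) (Af n) (X a)) i"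
      by (simp add: mv_def)
    also have "\<dots> = X a i" by (rule mv_adj_mv[OF Af True])
    finally show ?thesis .
  next
    case False
    have "(\<Sum>m<S a. cnj (V n m i) * Y a m) = 0"
      unfolding V_def Emb_def mat_id_def using False Sle[OF an] by (intro sum.neutral) auto
    thus ?thesis using suppX False Sle[OF an] by simp
  qed
  have bnd: "\<forall>n i j. cmod (V n i j) \<le> 1" using M0_entry[OF VM0] by blast
  obtain r U where r: "strict_mono r" and lim: "\<And>i j. (\<lambda>k. V (r k) i j) \<longlonglongrightarrow> U i j"
    using diag_conv[OF bnd] by blast
  have wl: "weak_limit_M1 U" unfolding weak_limit_M1_def
    by (rule exI[of _ "\<lambda>k. V (r k)"]) (use VM1 lim in auto)
  have rows: "summable (\<lambda>j. (cmod (U i j))\<^sup>2) \<and> (\<Sum>j. (cmod (U i j))\<^sup>2) \<le> 1" for i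
  proof (rule partial_bounded_sum)
    show "\<forall>j. 0 \<le> (cmod (U i j))\<^sup>2" by simp
    show "\<forall>L. (\<Sum>j<L. (cmod (U i j))\<^sup>2) \<le> 1"
    proof
      fix L
      have "(\<lambda>k. \<Sum>j<L. (cmod (V (r k) i j))\<^sup>2) \<longlonglongrightarrow> (\<Sum>j<L. (cmod (U i j))\<^sup>2)"
        by (intro tendsto_intros lim)
      thus "(\<Sum>j<L. (cmod (U i j))\<^sup>2) \<le> 1"
        by (rule LIMSEQ_le_const2) (use M0_row_partial[OF VM0] in auto)
    qed
  qed
  have cols: "summable (\<lambda>i. (cmod (U i j))\<^sup>2) \<and> (\<Sum>i. (cmod (U i j))\<^sup>2) \<le> 1" for j
  proof (rule partial_bounded_sum)
    show "\<forall>i. 0 \<le> (cmod (U i j))\<^sup>2" by simp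
    show "\<forall>L. (\<Sum>i<L. (cmod (U i j))\<^sup>2) \<le> 1"
    proof
      fix L
      have "(\<lambda>k. \<Sum>i<L. (cmod (V (r k) i j))\<^sup>2) \<longlonglongrightarrow> (\<Sum>i<L. (cmod (U i j))\<^sup>2)"
        by (intro tendsto_intros lim)
      thus "(\<Sum>i<L. (cmod (U i j))\<^sup>2) \<le> 1"
        by (rule LIMSEQ_le_const2) (use M0_col_partial[OF VM0] in auto)
    qed
  qed
  have UM0: "U \<in> M0" unfolding M0_def using rows cols by simp
  have ev: "k \<ge> Suc a \<Longrightarrow> a < r k" for k a using seq_suble[OF r, of k] by simp
  have e1: "(\<Sum>m<S a. U i m * X a m) = Y a i" for a i
  proof -
    have t: "(\<lambda>k. \<Sum>m<S a. V (r k) i m * X a m) \<longlonglongrightarrow> (\<Sum>m<S a. U i m * X a m)"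
      by (intro tendsto_intros lim)
    have "(\<lambda>k. (\<Sum>m<S a. V (r (k + Suc a)) i m * X a m)) \<longlonglongrightarrow> Y a i"
      using eq1[OF ev] by simp
    hence "(\<lambda>k. \<Sum>m<S a. V (r k) i m * X a m) \<longlonglongrightarrow> Y a i" by (rule LIMSEQ_offset)
    thus ?thesis using t LIMSEQ_unique by blast
  qed
  have e2: "(\<Sum>m<S a. cnj (U m i) * Y a m) = X a i" for a i
  proof -
    have t: "(\<lambda>k. \<Sum>m<S a. cnj (V (r k) m i) * Y a m) \<longlonglongrightarrow> (\<Sum>m<S a. cnj (U m i) * Y a m)"
      by (intro tendsto_intros lim)
    have "(\<lambda>k. (\<Sum>m<S a. cnj (V (r (k + Suc a)) m i) * Y a m)) \<longlonglongrightarrow> X a i"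
      using eq2[OF ev] by simp
    hence "(\<lambda>k. \<Sum>m<S a. cnj (V (r k) m i) * Y a m) \<longlonglongrightarrow> X a i" by (rule LIMSEQ_offset)
    thus ?thesis using t LIMSEQ_unique by blast
  qed
  show ?thesis using UM0 wl e1 e2 by blast
qed


lemma Qv_low: "k < mi_deg J \<Longrightarrow> Qv a \<zeta> (J::('n::{finite,linorder}) mi) k = 0"
  unfolding Qv_def by (rule sum.neutral) (auto simp: Dset_def dest: mi_le_deg)

lemma Fv_low:
  assumes c0: "\<forall>i. fps_nth (\<zeta> i) 0 = 0" and "card (NZ k :: ('n::{finite,linorder}) mi set) \<le> i"
  shows "fps_nth (pull_hol \<zeta> (fJ a (enumJ i :: 'n mi))) k = 0"
proof -
  have "k < mi_deg (enumJ i :: 'n mi)" using assms(2) enumJ_deg[of i k, where 'n='n] by (simp add: not_le)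
  thus ?thesis unfolding Fv_eq[OF c0] using cm_low[OF c0] Qv_low by simp
qed

lemma Gv_low:
  assumes c0: "\<forall>i. fps_nth (\<zeta> i) 0 = 0" and "card (NZ k :: ('n::{finite,linorder}) mi set) \<le> i"
  shows "fps_nth (pull_hol \<zeta> (gJ a (enumJ i :: 'n mi))) k = 0"
proof -
  have "k < mi_deg (enumJ i :: 'n mi)" using assms(2) enumJ_deg[of i k, where 'n='n] by (simp add: not_le)
  thus ?thesis unfolding Gv_eq[OF c0] using cm_low[OF c0] Qv_low by simp
qed

lemma gJ_low:
  assumes "card (NZ (mi_deg K) :: ('n::{finite,linorder}) mi set) \<le> m"
  shows "gJ a (enumJ m) (K::'n mi) = 0"
proof -
  have "mi_deg K < mi_deg (enumJ m :: 'n mi)" using assms enumJ_deg[of m "mi_deg K", where 'n='n] by (simp add: not_le)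
  thus ?thesis unfolding gJ_def using mi_le_deg[of "enumJ m" K] by auto
qed

lemma fJ_low:
  assumes "card (NZ (mi_deg K) :: ('n::{finite,linorder}) mi set) \<le> m"
  shows "fJ a (enumJ m) (K::'n mi) = 0"
proof -
  have "mi_deg K < mi_deg (enumJ m :: 'n mi)" using assms enumJ_deg[of m "mi_deg K", where 'n='n] by (simp add: not_le)
  thus ?thesis unfolding fJ_def using mi_le_deg[of "enumJ m" K] by auto
qed

lemma fUg_pull:
  fixes a :: "('n::{finite,linorder}) mi \<Rightarrow> 'n mi \<Rightarrow> complex"
  assumes c0: "\<forall>i. fps_nth (\<zeta> i) 0 = 0"
  shows "fps_nth (pull_hol \<zeta> (fUg a U i)) k = fps_nth (pull_hol \<zeta> (fJ a (enumJ i))) k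
           - (\<Sum>m<card (NZ k :: 'n mi set). U i m * fps_nth (pull_hol \<zeta> (gJ a (enumJ m))) k)"
proof -
  let ?B = "card (NZ k :: 'n mi set)"
  have sinf: "(\<Sum>m. U i m * gJ a (enumJ m) K) = (\<Sum>m<?B. U i m * gJ a (enumJ m) K)" if K: "K \<in> Dset k" for K
  proof (rule suminf_supp[THEN conjunct2])
    fix m assume "m \<notin> {..<?B}"
    hence "card (NZ (mi_deg K) :: 'n mi set) \<le> m"
      using card_NZ_mono[of "mi_deg K" k, where 'n='n] K by (auto simp: Dset_def)
    from gJ_low[OF this, of a] show "U i m * gJ a (enumJ m) K = 0" by simp
  qed simp
  have "fps_nth (pull_hol \<zeta> (fUg a U i)) k =
      (\<Sum>K\<in>Dset k. fJ a (enumJ i) K * cm \<zeta> K k) - (\<Sum>K\<in>Dset k. \<Sum>m<?B. U i m * (gJ a (enumJ m) K * cm \<zeta> K k))"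
    unfolding pull_hol_nth fUg_def cm_def sum_subtractf[symmetric]
    by (rule sum.cong[OF refl]) (simp add: sinf algebra_simps sum_distrib_left sum_distrib_right)
  also have "(\<Sum>K\<in>Dset k. \<Sum>m<?B. U i m * (gJ a (enumJ m) K * cm \<zeta> K k)) =
       (\<Sum>m<?B. U i m * (\<Sum>K\<in>Dset k. gJ a (enumJ m) K * cm \<zeta> K k))"
    by (subst sum.swap) (simp add: sum_distrib_left)
  finally show ?thesis unfolding pull_hol_nth cm_def by simp
qed

lemma Ufg_pull:
  fixes a :: "('n::{finite,linorder}) mi \<Rightarrow> 'n mi \<Rightarrow> complex"
  assumes c0: "\<forall>i. fps_nth (\<zeta> i) 0 = 0"
  shows "fps_nth (pull_hol \<zeta> (Ufg a U i)) k =
           (\<Sum>m<card (NZ k :: 'n mi set). cnj (U m i) * fps_nth (pull_hol \<zeta> (fJ a (enumJ m))) k)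
           - fps_nth (pull_hol \<zeta> (gJ a (enumJ i))) k"
proof -
  let ?B = "card (NZ k :: 'n mi set)"
  have sinf: "(\<Sum>m. cnj (U m i) * fJ a (enumJ m) K) = (\<Sum>m<?B. cnj (U m i) * fJ a (enumJ m) K)" if K: "K \<in> Dset k" for K
  proof (rule suminf_supp[THEN conjunct2])
    fix m assume "m \<notin> {..<?B}"
    hence "card (NZ (mi_deg K) :: 'n mi set) \<le> m"
      using card_NZ_mono[of "mi_deg K" k, where 'n='n] K by (auto simp: Dset_def)
    from fJ_low[OF this, of a] show "cnj (U m i) * fJ a (enumJ m) K = 0" by simp
  qed simp
  have "fps_nth (pull_hol \<zeta> (Ufg a U i)) k =
      (\<Sum>K\<in>Dset k. \<Sum>m<?B. cnj (U m i) * (fJ a (enumJ m) K * cm \<zeta> K k)) - (\<Sum>K\<in>Dset k. gJ a (enumJ i) K * cm \<zeta> K k)"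
    unfolding pull_hol_nth Ufg_def cm_def sum_subtractf[symmetric]
    by (rule sum.cong[OF refl]) (simp add: sinf algebra_simps sum_distrib_left sum_distrib_right)
  also have "(\<Sum>K\<in>Dset k. \<Sum>m<?B. cnj (U m i) * (fJ a (enumJ m) K * cm \<zeta> K k)) =
       (\<Sum>m<?B. cnj (U m i) * (\<Sum>K\<in>Dset k. fJ a (enumJ m) K * cm \<zeta> K k))"
    by (subst sum.swap) (simp add: sum_distrib_left)
  finally show ?thesis unfolding pull_hol_nth cm_def by simp
qed

lemma pull_hol_0: "fps_nth (pull_hol \<zeta> \<phi>) 0 = \<phi> (mi_zero::('n::finite) mi)"
proof -
  have D: "Dset 0 = {mi_zero :: 'n mi}" unfolding Dset_def using mi_deg_eq0 by auto
  show ?thesis unfolding pull_hol_nth D by (simp add: curve_mono_zero)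
qed

lemma sum_trunc:
  fixes f :: "nat \<Rightarrow> 'a::comm_monoid_add"
  assumes "\<forall>i\<ge>T. f i = 0" "T \<le> N" shows "(\<Sum>i<N. f i) = (\<Sum>i<T. f i)"
proof (rule sum.mono_neutral_right)
  show "finite {..<N}" by simp
  show "{..<T} \<subseteq> {..<N}" using assms(2) by auto
  show "\<forall>i\<in>{..<N} - {..<T}. f i = 0" using assms(1) by auto
qed

lemma pull_real_index:
  fixes c :: "('n::{finite,linorder}) mi \<Rightarrow> 'n mi \<Rightarrow> complex" and a :: "'n mi \<Rightarrow> 'n mi \<Rightarrow> complex"
    and h :: "'n fser" and \<zeta> :: "'n \<Rightarrow> complex fps"
  assumes c0: "\<forall>i. fps_nth (\<zeta> i) 0 = 0" and decomp: "\<forall>J K. c J K = repr_coeff h a J K"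
  shows "pull_real \<zeta> c x y =
    (if y = 0 then fps_nth (pull_hol \<zeta> h) x else 0) + (if x = 0 then cnj (fps_nth (pull_hol \<zeta> h) y) else 0) +
    (\<Sum>i<card (NZ (x+y) :: 'n mi set). fps_nth (pull_hol \<zeta> (fJ a (enumJ i))) x * cnj (fps_nth (pull_hol \<zeta> (fJ a (enumJ i))) y)
                    - fps_nth (pull_hol \<zeta> (gJ a (enumJ i))) x * cnj (fps_nth (pull_hol \<zeta> (gJ a (enumJ i))) y))"
  unfolding pull_real_identity[OF c0 decomp]
  by (subst sum.reindex_bij_betw[OF enumJ_bij, symmetric]) (rule refl)


theorem mainTheorem6:
  fixes c :: "('n::{finite,linorder}) mi \<Rightarrow> 'n mi \<Rightarrow> complex"
    and h :: "'n fser"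
    and a :: "'n mi \<Rightarrow> 'n mi \<Rightarrow> complex"
    and \<zeta> :: "'n \<Rightarrow> complex fps"
  assumes r_real: "\<forall>J K. c K J = cnj (c J K)"
    and r_zero: "c mi_zero mi_zero = 0"
    and dr_nonzero: "\<exists>i. c (mi_unit i) mi_zero \<noteq> 0 \<or> c mi_zero (mi_unit i) \<noteq> 0"
    and h_zero: "h mi_zero = 0"
    and decomp: "\<forall>J K. c J K = repr_coeff h a J K"
    and curve0: "\<forall>i. fps_nth (\<zeta> i) 0 = 0"
  shows "(\<forall>p q. pull_real \<zeta> c p q = 0) \<longleftrightarrow>
    (\<exists>U. U \<in> M0 \<and> weak_limit_M1 U \<and>
       (\<forall>\<phi> \<in> fser_ideal ({h} \<union> range (fUg a U) \<union> range (Ufg a U)).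
          pull_hol \<zeta> \<phi> = 0))"
proof -
  let ?S = "\<lambda>k. card (NZ k :: 'n mi set)"
  define Yv where "Yv k i = fps_nth (pull_hol \<zeta> (fJ a (enumJ i))) k" for k i
  define Xv where "Xv k i = fps_nth (pull_hol \<zeta> (gJ a (enumJ i))) k" for k i
  have suppY: "\<forall>k i. ?S k \<le> i \<longrightarrow> Yv k i = 0"
    unfolding Yv_def using Fv_low[OF curve0] by blast
  have suppX: "\<forall>k i. ?S k \<le> i \<longrightarrow> Xv k i = 0"
    unfolding Xv_def using Gv_low[OF curve0] by blast
  have idx: "pull_real \<zeta> c x y =
    (if y = 0 then fps_nth (pull_hol \<zeta> h) x else 0) + (if x = 0 then cnj (fps_nth (pull_hol \<zeta> h) y) else 0) +
    (\<Sum>i<?S (x+y). Yv x i * cnj (Yv y i) - Xv x i * cnj (Xv y i))" for x y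
    unfolding Yv_def Xv_def by (rule pull_real_index[OF curve0 decomp])
  have sumext: "(\<Sum>i<N. Yv x i * cnj (Yv y i) - Xv x i * cnj (Xv y i)) =
                (\<Sum>i<?S x. Yv x i * cnj (Yv y i) - Xv x i * cnj (Xv y i))" if "?S x \<le> N" for N x y
    by (rule sum_trunc) (use suppX suppY that in auto)
  have S0: "?S 0 = 0"
  proof -
    have "NZ 0 = ({} :: 'n mi set)" unfolding NZ_def using mi_deg_eq0 by auto
    thus ?thesis by simp
  qed
  show ?thesis
  proof
    assume L: "\<forall>p q. pull_real \<zeta> c p q = 0"
    have ph: "pull_hol \<zeta> h = 0"
    proof (rule fps_ext)
      fix k show "fps_nth (pull_hol \<zeta> h) k = fps_nth 0 k"
      proof (cases "k = 0")
        case True thus ?thesis using pull_hol_0[of \<zeta> h] h_zero by simp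
      next
        case False
        have "(\<Sum>i<?S (k+0). Yv k i * cnj (Yv 0 i) - Xv k i * cnj (Xv 0 i)) = 0"
          using suppX suppY S0 by (intro sum.neutral) auto
        hence "pull_real \<zeta> c k 0 = fps_nth (pull_hol \<zeta> h) k" using idx[of k 0] False by simp
        thus ?thesis using L by simp
      qed
    qed
    have gram: "\<forall>a b M. ?S a \<le> M \<longrightarrow> ?S b \<le> M \<longrightarrow> ip M (Yv a) (Yv b) = ip M (Xv a) (Xv b)"
    proof (intro allI impI)
      fix a b M assume aM: "?S a \<le> M" and bM: "?S b \<le> M"
      have "ip M (Yv a) (Yv b) - ip M (Xv a) (Xv b) = (\<Sum>i<M. Yv a i * cnj (Yv b i) - Xv a i * cnj (Xv b i))"
        unfolding ip_def by (simp add: sum_subtractf)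
      also have "\<dots> = (\<Sum>i<?S a. Yv a i * cnj (Yv b i) - Xv a i * cnj (Xv b i))" by (rule sumext[OF aM])
      also have "\<dots> = (\<Sum>i<?S (a+b). Yv a i * cnj (Yv b i) - Xv a i * cnj (Xv b i))"
        by (rule sumext[symmetric]) (rule card_NZ_mono, simp)
      also have "\<dots> = pull_real \<zeta> c a b" using idx[of a b] ph by simp
      also have "\<dots> = 0" using L by simp
      finally show "ip M (Yv a) (Yv b) = ip M (Xv a) (Xv b)" by simp
    qed
    obtain U where U: "U \<in> M0" "weak_limit_M1 U"
      and e: "\<And>k i. (\<Sum>m<?S k. U i m * Xv k m) = Yv k i" "\<And>k i. (\<Sum>m<?S k. cnj (U m i) * Yv k m) = Xv k i"
      using construct_U[OF suppX suppY gram] by blast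
    have G: "\<forall>q\<in>{h} \<union> range (fUg a U) \<union> range (Ufg a U). pull_hol \<zeta> q = 0"
    proof
      fix q assume "q \<in> {h} \<union> range (fUg a U) \<union> range (Ufg a U)"
      then consider "q = h" | i where "q = fUg a U i" | i where "q = Ufg a U i" by blast
      thus "pull_hol \<zeta> q = 0"
      proof cases
        case 1 thus ?thesis using ph by simp
      next
        case (2 i)
        show ?thesis
        proof (rule fps_ext)
          fix k
          have "fps_nth (pull_hol \<zeta> (fUg a U i)) k = Yv k i - (\<Sum>m<?S k. U i m * Xv k m)"
            unfolding Yv_def Xv_def by (rule fUg_pull[OF curve0])
          thus "fps_nth (pull_hol \<zeta> q) k = fps_nth 0 k" using 2 e(1) by simp
        qed
      next
        case (3 i)
        show ?thesis
        proof (rule fps_ext)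
          fix k
          have "fps_nth (pull_hol \<zeta> (Ufg a U i)) k = (\<Sum>m<?S k. cnj (U m i) * Yv k m) - Xv k i"
            unfolding Yv_def Xv_def by (rule Ufg_pull[OF curve0])
          thus "fps_nth (pull_hol \<zeta> q) k = fps_nth 0 k" using 3 e(2) by simp
        qed
      qed
    qed
    have "\<forall>\<phi> \<in> fser_ideal ({h} \<union> range (fUg a U) \<union> range (Ufg a U)). pull_hol \<zeta> \<phi> = 0"
      using ideal_pull_zero[OF curve0 G] by blast
    thus "\<exists>U. U \<in> M0 \<and> weak_limit_M1 U \<and>
       (\<forall>\<phi> \<in> fser_ideal ({h} \<union> range (fUg a U) \<union> range (Ufg a U)). pull_hol \<zeta> \<phi> = 0)"
      using U by blast
  next
    assume "\<exists>U. U \<in> M0 \<and> weak_limit_M1 U \<and>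
       (\<forall>\<phi> \<in> fser_ideal ({h} \<union> range (fUg a U) \<union> range (Ufg a U)). pull_hol \<zeta> \<phi> = 0)"
    then obtain U where I: "\<forall>\<phi> \<in> fser_ideal ({h} \<union> range (fUg a U) \<union> range (Ufg a U)). pull_hol \<zeta> \<phi> = 0"
      by blast
    have ph: "pull_hol \<zeta> h = 0" using I gen_in_ideal[of h "{h} \<union> range (fUg a U) \<union> range (Ufg a U)"] by blast
    have eqY: "Yv k i = (\<Sum>m<?S k. U i m * Xv k m)" for k i
    proof -
      have "pull_hol \<zeta> (fUg a U i) = 0"
        using I gen_in_ideal[of "fUg a U i" "{h} \<union> range (fUg a U) \<union> range (Ufg a U)"] by blast
      hence "fps_nth (pull_hol \<zeta> (fUg a U i)) k = 0" by simp
      moreover have "fps_nth (pull_hol \<zeta> (fUg a U i)) k = Yv k i - (\<Sum>m<?S k. U i m * Xv k m)"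
        unfolding Yv_def Xv_def by (rule fUg_pull[OF curve0])
      ultimately show ?thesis by simp
    qed
    have eqX: "Xv k i = (\<Sum>m<?S k. cnj (U m i) * Yv k m)" for k i
    proof -
      have "pull_hol \<zeta> (Ufg a U i) = 0"
        using I gen_in_ideal[of "Ufg a U i" "{h} \<union> range (fUg a U) \<union> range (Ufg a U)"] by blast
      hence "fps_nth (pull_hol \<zeta> (Ufg a U i)) k = 0" by simp
      moreover have "fps_nth (pull_hol \<zeta> (Ufg a U i)) k = (\<Sum>m<?S k. cnj (U m i) * Yv k m) - Xv k i"
        unfolding Yv_def Xv_def by (rule Ufg_pull[OF curve0])
      ultimately show ?thesis by simp
    qed
    show "\<forall>p q. pull_real \<zeta> c p q = 0"
    proof (intro allI)
      fix x y
      let ?N = "?S (x+y)"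
      have xN: "?S x \<le> ?N" and yN: "?S y \<le> ?N" by (rule card_NZ_mono, simp)+
      have inner: "(\<Sum>i<?N. cnj (U i m) * Yv y i) = Xv y m" for m
      proof -
        have "(\<Sum>i<?N. cnj (U i m) * Yv y i) = (\<Sum>i<?S y. cnj (U i m) * Yv y i)"
          by (rule sum_trunc) (use suppY yN in auto)
        thus ?thesis using eqX[of y m] by simp
      qed
      have "(\<Sum>i<?N. Yv x i * cnj (Yv y i)) = (\<Sum>i<?N. \<Sum>m<?S x. U i m * Xv x m * cnj (Yv y i))"
        by (rule sum.cong[OF refl]) (simp add: eqY[of x] sum_distrib_right)
      also have "\<dots> = (\<Sum>m<?S x. \<Sum>i<?N. U i m * Xv x m * cnj (Yv y i))" by (rule sum.swap)
      also have "\<dots> = (\<Sum>m<?S x. Xv x m * cnj (\<Sum>i<?N. cnj (U i m) * Yv y i))"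
        by (rule sum.cong[OF refl]) (simp add: sum_distrib_left mult_ac)
      also have "\<dots> = (\<Sum>m<?S x. Xv x m * cnj (Xv y m))" using inner by simp
      also have "\<dots> = (\<Sum>m<?N. Xv x m * cnj (Xv y m))"
        by (rule sum_trunc[symmetric]) (use suppX xN in auto)
      finally have eq: "(\<Sum>i<?N. Yv x i * cnj (Yv y i)) = (\<Sum>m<?N. Xv x m * cnj (Xv y m))" .
      have "pull_real \<zeta> c x y = (\<Sum>i<?N. Yv x i * cnj (Yv y i) - Xv x i * cnj (Xv y i))"
        using idx[of x y] ph by simp
      also have "\<dots> = 0" using eq by (simp add: sum_subtractf)
      finally show "pull_real \<zeta> c x y = 0" .
    qed
  qed
qed

end
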